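(* Let $\mathcal P\subset\mathbb R^n$ be an $n$-dimensional convex polytope and consider $\dot x=Ax+a+Bu$, $x\in\mathcal P$, with $A\in\mathbb R^{n\times n}$, $a\in\mathbb R^n$, $B\in\mathbb R^{n\times m}$, under assumptions (A1) $\operatorname{rank}(B)=n-1$; (A2) $(A,B)$ controllable; (A3) $\operatorname{int}\mathcal P\cap\mathcal O=\emptyset$; (A4) $\mathcal F$ is an $(n-1)$-dimensional polytope contained in the boundary of $\mathcal P$. Define $\mathcal A^-=\mathcal H^-\setminus(\mathcal F\cup\mathcal B^-)$, and $\mathcal A^+=\mathcal P^+$ if $\mathcal P^+\subset\mathcal O\cap\{x\in\mathcal P:\beta^Tx>\beta^Tv^+\}$, $\mathcal A^+=\emptyset$ otherwise; let $\mathcal A=\mathcal A^-\cup\mathcal A^+$. Then $\mathrm{Reach}(\mathcal P,\mathcal F)=\mathcal P\setminus\mathcal A$. Moreover, $\mathrm{Reach}(\mathcal P,\mathcal F)\xrightarrow{\mathrm{Reach}(\mathcal P,\mathcal F)}\mathcal F$, and no point of $\mathcal A$ can reach $\mathcal F$ with constraint in $\mathcal P$.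
   Context: Controls are piecewise continuous functions $t\mapsto u(t)\in\mathbb R^m$; $\phi^u_t(x_0)$ is the solution from $x_0$. For closed sets $\Omega,\Omega_f$ and $x\in\Omega$, $x\xrightarrow{\Omega}\Omega_f$ ("$x$ can reach $\Omega_f$ with constraint in $\Omega$") means there exist a piecewise continuous control $u$ and $T\ge0$ with $\phi^u_T(x)\in\Omega_f$ and $\phi^u_t(x)\in\Omega$ for all $t\in[0,T]$; for $\Omega'\subseteq\Omega$, $\Omega'\xrightarrow{\Omega}\Omega_f$ means this holds for every $x\in\Omega'$. $\mathrm{Reach}(\mathcal P,\mathcal F)$ is the set of all $x\in\mathcal P$ with $x\xrightarrow{\mathcal P}\mathcal F$. $\mathcal B=\operatorname{Im}(B)$, $\mathcal O=\{x:Ax+a\in\mathcal B\}$; $\beta$ is the unit normal to $\mathcal B$ with $\beta^T(Ax+a)\le0$ for all $x\in\mathcal P$; $\mathcal B_z=\{x:\beta^Tx=\beta^Tz\}$. $v^-\in\arg\min\{\beta^Tx:x\in\mathcal F\}$, $v^+\in\arg\max\{\beta^Tx:x\in\mathcal F\}$, $\mathcal H^-=\{x\in\mathcal P:\beta^Tx\le\beta^Tv^-\}$, $\mathcal P^+=\arg\max\{\beta^Tx:x\in\mathcal P\}$, and $\mathcal B^-=\mathcal B_{v^-}\cap\mathcal O$ if $\mathcal B_{v^-}\cap\mathcal O\cap\mathcal F\ne\emptyset$, $\mathcal B^-=\emptyset$ otherwise. *)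

theory Defs
  imports "HOL-Analysis.Analysis"
begin

text \<open>Piecewise continuity of a control on [0,T]: there is a finite strictly increasing
  list of break points 0 = t_0 < ... < t_k = T such that on each open piece u coincides
  with a function continuous on the closed piece (so one-sided limits exist).\<close>
definition piecewise_continuous_on :: "real \<Rightarrow> (real \<Rightarrow> 'b::topological_space) \<Rightarrow> bool" where
  "piecewise_continuous_on T u \<longleftrightarrow>
     (\<exists>ts::real list. ts \<noteq> [] \<and> sorted_wrt (<) ts \<and> hd ts = 0 \<and> last ts = T \<and>
        (\<forall>i < length ts - 1. \<exists>g. continuous_on {ts ! i .. ts ! Suc i} g \<and>
             (\<forall>s \<in> {ts ! i <..< ts ! Suc i}. u s = g s)))"

definition is_solution ::
  "real^'n^'n \<Rightarrow> real^'n \<Rightarrow> real^'m^'n \<Rightarrow> (real \<Rightarrow> real^'m) \<Rightarrow> real^'n \<Rightarrow> real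
    \<Rightarrow> (real \<Rightarrow> real^'n) \<Rightarrow> bool" where
  "is_solution A a B u x0 T x \<longleftrightarrow>
     continuous_on {0..T} x \<and>
     (\<forall>t \<in> {0..T}. x t = x0 + integral {0..t} (\<lambda>s. A *v x s + a + B *v u s))"

definition reaches ::
  "real^'n^'n \<Rightarrow> real^'n \<Rightarrow> real^'m^'n \<Rightarrow> (real^'n) set \<Rightarrow> real^'n \<Rightarrow> (real^'n) set \<Rightarrow> bool" where
  "reaches A a B Om x0 Omf \<longleftrightarrow>
     (\<exists>(u::real \<Rightarrow> real^'m) T xt. T \<ge> 0 \<and> piecewise_continuous_on T u \<and>
        is_solution A a B u x0 T xt \<and> xt T \<in> Omf \<and> (\<forall>t \<in> {0..T}. xt t \<in> Om))"

definition Reach ::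
  "real^'n^'n \<Rightarrow> real^'n \<Rightarrow> real^'m^'n \<Rightarrow> (real^'n) set \<Rightarrow> (real^'n) set \<Rightarrow> (real^'n) set" where
  "Reach A a B P F = {x \<in> P. reaches A a B P x F}"

definition controllable :: "real^'n^'n \<Rightarrow> real^'m^'n \<Rightarrow> bool" where
  "controllable A B \<longleftrightarrow>
     span (\<Union>k < CARD('n). range (\<lambda>v. ((\<lambda>y. A *v y) ^^ k) (B *v v))) = UNIV"

end

theory Submission
  imports Defs
begin
lemma pc_integrable:
  fixes u :: "real \<Rightarrow> 'b::euclidean_space"
  assumes "piecewise_continuous_on T u"
  shows "u integrable_on {0..T}"
proof -
  obtain ts where ts: "ts \<noteq> []" "sorted_wrt (<) ts" "hd ts = 0" "last ts = T"
    and pcs: "\<And>i. i < length ts - 1 \<Longrightarrow> \<exists>g. continuous_on {ts ! i .. ts ! Suc i} g \<and>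
             (\<forall>s \<in> {ts ! i <..< ts ! Suc i}. u s = g s)"
    using assms unfolding piecewise_continuous_on_def by blast
  have "u integrable_on {ts!0 .. ts!k}" if "k < length ts" for k
    using that
  proof (induction k)
    case 0
    then show ?case using integrable_on_refl[of u "ts!0"] by simp
  next
    case (Suc k)
    obtain g where g: "continuous_on {ts ! k .. ts ! Suc k} g"
      "\<forall>s \<in> {ts ! k <..< ts ! Suc k}. u s = g s" using pcs[of k] Suc.prems by (metis Suc_lessE diff_Suc_1 less_diff_conv)
    have gi: "g integrable_on {ts ! k .. ts ! Suc k}" using g(1) by (rule integrable_continuous_real)
    have "u integrable_on {ts ! k .. ts ! Suc k}"
      using integrable_spike_finite[of "{ts!k, ts!Suc k}" "{ts ! k .. ts ! Suc k}" u g] gi g(2) by auto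
    moreover have "ts!0 \<le> ts!k" using sorted_wrt_nth_less[OF ts(2), of 0 k] Suc.prems
      by (cases k) auto
    moreover have "ts!k \<le> ts!Suc k" using sorted_wrt_nth_less[OF ts(2), of k "Suc k"] Suc.prems by auto
    ultimately show ?case using Suc.IH Suc.prems Henstock_Kurzweil_Integration.integrable_combine[where f=u and a="ts!0" and c="ts!k" and b="ts!Suc k"] by simp
  qed
  from this[of "length ts - 1"] ts show ?thesis
    by (simp add: hd_conv_nth last_conv_nth)
qed

lemma sol_integrable:
  fixes u :: "real \<Rightarrow> real^'m" and x :: "real \<Rightarrow> real^'n"
  assumes "piecewise_continuous_on T u" "continuous_on {0..T} x" "0 \<le> t" "t \<le> T"
  shows "(\<lambda>s. A *v x s + a + B *v u s) integrable_on {0..t}"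
proof -
  have "u integrable_on {0..T}" using assms(1) by (rule pc_integrable)
  then have u: "u integrable_on {0..t}" using assms(3,4) integrable_subinterval_real by fastforce
  have Bi: "(\<lambda>s. B *v u s) integrable_on {0..t}"
    using integrable_linear[OF u, of "\<lambda>v. B *v v"] by (simp add: o_def)
  moreover have c: "continuous_on {0..t} (\<lambda>s. A *v x s + a)"
  proof -
    have xc: "continuous_on {0..t} x" by (rule continuous_on_subset[OF assms(2)]) (use assms in auto)
    show ?thesis
      by (intro continuous_intros bounded_linear.continuous_on[OF matrix_vector_mul_bounded_linear xc])
  qed
  show ?thesis
    using integrable_add[OF integrable_continuous_real[OF c] Bi] by simp
qed

lemma sw_bounds: "sorted_wrt (<) (xs::real list) \<Longrightarrow> x \<in> set xs \<Longrightarrow> hd xs \<le> x \<and> x \<le> last xs"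
proof (induction xs)
  case Nil then show ?case by simp
next
  case (Cons b xs)
  show ?case
  proof (cases "xs = []")
    case True with Cons.prems show ?thesis by simp
  next
    case False
    have h: "\<forall>y\<in>set xs. b < y" "sorted_wrt (<) xs" using Cons.prems by auto
    moreover have "last xs \<in> set xs" using False by simp
    ultimately show ?thesis using Cons.prems(2) Cons.IH[OF h(2)] False by fastforce
  qed
qed

lemma pc_append:
  assumes "piecewise_continuous_on T1 u1" "piecewise_continuous_on T2 u2"
  shows "piecewise_continuous_on (T1+T2) (\<lambda>t. if t \<le> T1 then u1 t else u2 (t - T1))"
proof -
  obtain ts1 where ts1: "ts1 \<noteq> []" "sorted_wrt (<) ts1" "hd ts1 = 0" "last ts1 = T1"
    and p1: "\<And>i. i < length ts1 - 1 \<Longrightarrow> \<exists>g. continuous_on {ts1 ! i .. ts1 ! Suc i} g \<and>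
             (\<forall>s \<in> {ts1 ! i <..< ts1 ! Suc i}. u1 s = g s)"
    using assms(1) unfolding piecewise_continuous_on_def by blast
  obtain ts2 where ts2: "ts2 \<noteq> []" "sorted_wrt (<) ts2" "hd ts2 = 0" "last ts2 = T2"
    and p2: "\<And>i. i < length ts2 - 1 \<Longrightarrow> \<exists>g. continuous_on {ts2 ! i .. ts2 ! Suc i} g \<and>
             (\<forall>s \<in> {ts2 ! i <..< ts2 ! Suc i}. u2 s = g s)"
    using assms(2) unfolding piecewise_continuous_on_def by blast
  define n1 where "n1 = length ts1"
  define n2 where "n2 = length ts2"
  have n1: "n1 \<ge> 1" and n2: "n2 \<ge> 1" using ts1 ts2 by (auto simp: n1_def n2_def Suc_le_eq)
  define ts where "ts = ts1 @ map (\<lambda>t. t + T1) (tl ts2)"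
  have len: "length ts = n1 + n2 - 1" using n2 by (simp add: ts_def n1_def n2_def)
  have le1: "x \<le> T1" if "x \<in> set ts1" for x using sw_bounds[OF ts1(2) that] ts1 by simp
  have gt2: "y > 0" if "y \<in> set (tl ts2)" for y
    using ts2 that by (cases ts2) auto
  have ge2: "ts2 ! j \<ge> 0" if "j < n2" for j
    using sw_bounds[OF ts2(2), of "ts2!j"] that ts2 by (auto simp: n2_def)
  have sorted: "sorted_wrt (<) ts"
    unfolding ts_def sorted_wrt_append sorted_wrt_map
  proof (intro conjI ballI)
    show "sorted_wrt (<) ts1" by fact
    show "sorted_wrt (\<lambda>x y. x + T1 < y + T1) (tl ts2)"
      using ts2(2) by (cases ts2) (auto elim: sorted_wrt_mono_rel[rotated])
    fix x y assume "x \<in> set ts1" "y \<in> set (map (\<lambda>t. t + T1) (tl ts2))"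
    then show "x < y" using le1 gt2 by force
  qed
  have hd: "hd ts = 0" using ts1 by (simp add: ts_def)
  have last: "last ts = T1 + T2"
  proof (cases "tl ts2 = []")
    case True
    then have "ts2 = [hd ts2]" using ts2(1) by (cases ts2) auto
    then have "T2 = 0" using ts2 by (metis last_ConsL)
    then show ?thesis using True ts1 by (simp add: ts_def)
  next
    case False
    then have "last (tl ts2) = last ts2" by (cases ts2) auto
    then show ?thesis using False ts2 by (simp add: ts_def last_map)
  qed
  have nthA: "ts ! i = ts1 ! i" if "i < n1" for i using that by (simp add: ts_def nth_append n1_def)
  have nthB: "ts ! i = ts2 ! (i - (n1 - 1)) + T1" if "n1 - 1 \<le> i" "i < length ts" for i
  proof (cases "i = n1 - 1")
    case True
    then have "ts ! i = last ts1" using nthA n1 ts1(1) by (simp add: last_conv_nth n1_def)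
    then show ?thesis using True ts1 ts2 by (simp add: hd_conv_nth)
  next
    case False
    then have i: "i \<ge> n1" using that by auto
    have "Suc (i - n1) = i - (n1 - 1)" using i n1 by simp
    then show ?thesis using that len i
      by (simp add: ts_def nth_append n1_def nth_tl n2_def)
  qed
  have pieces: "\<exists>g. continuous_on {ts ! i .. ts ! Suc i} g \<and>
             (\<forall>s \<in> {ts ! i <..< ts ! Suc i}. (if s \<le> T1 then u1 s else u2 (s - T1)) = g s)"
    if i: "i < length ts - 1" for i
  proof (cases "Suc i < n1")
    case True
    have ii: "i < length ts1 - 1" using True n1_def by linarith
    obtain g where g: "continuous_on {ts1 ! i .. ts1 ! Suc i} g"
      "\<forall>s \<in> {ts1 ! i <..< ts1 ! Suc i}. u1 s = g s" using p1[OF ii] by blast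
    have "ts1 ! Suc i \<le> T1" using le1 True n1_def by auto
    then show ?thesis using g True nthA[of i] nthA[of "Suc i"]
      by (intro exI[of _ g]) auto
  next
    case False
    define j where "j = i - (n1 - 1)"
    have j: "j < n2 - 1" "Suc i - (n1 - 1) = Suc j" using False i len n1 by (auto simp: j_def)
    obtain g where g: "continuous_on {ts2 ! j .. ts2 ! Suc j} g"
      "\<forall>s \<in> {ts2 ! j <..< ts2 ! Suc j}. u2 s = g s" using p2[of j] j n2_def by blast
    have e1: "ts ! i = ts2 ! j + T1" using nthB[of i] False i j_def by auto
    have e2: "ts ! Suc i = ts2 ! Suc j + T1" using nthB[of "Suc i"] False i j by auto
    have c: "continuous_on {ts2 ! j + T1 .. ts2 ! Suc j + T1} (\<lambda>s. g (s - T1))"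
      by (rule continuous_on_compose2[OF g(1)]) (auto intro!: continuous_intros)
    have "ts2 ! j \<ge> 0" using ge2 j by auto
    then show ?thesis unfolding e1 e2 using c g(2)
      by (intro exI[of _ "\<lambda>s. g (s - T1)"]) auto
  qed
  show ?thesis unfolding piecewise_continuous_on_def
    using sorted hd last pieces ts1(1) by (intro exI[of _ ts]) (auto simp: ts_def)
qed

lemma reaches_refl:
  assumes "x \<in> P" "x \<in> F"
  shows "reaches A a B P x F"
proof -
  have pc: "piecewise_continuous_on 0 (\<lambda>t. 0::real^'m)"
    unfolding piecewise_continuous_on_def by (intro exI[of _ "[0]"]) auto
  have "is_solution A a B (\<lambda>t. 0) x 0 (\<lambda>t. x)"
    unfolding is_solution_def by auto
  then show ?thesis unfolding reaches_def using pc assms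
    by (intro exI[of _ "\<lambda>t. 0"] exI[of _ "0::real"] exI[of _ "\<lambda>t. x"]) auto
qed

lemma reaches_trans:
  fixes A :: "real^'n^'n" and B :: "real^'m^'n"
  assumes r1: "reaches A a B P x {y}" and r2: "reaches A a B P y F"
  shows "reaches A a B P x F"
proof -
  obtain u1 T1 x1 where T1: "T1 \<ge> 0" and pc1: "piecewise_continuous_on T1 u1"
    and s1: "is_solution A a B u1 x T1 x1" and e1: "x1 T1 = y" and in1: "\<forall>t\<in>{0..T1}. x1 t \<in> P"
    using r1 unfolding reaches_def by blast
  obtain u2 T2 x2 where T2: "T2 \<ge> 0" and pc2: "piecewise_continuous_on T2 u2"
    and s2: "is_solution A a B u2 y T2 x2" and e2: "x2 T2 \<in> F" and in2: "\<forall>t\<in>{0..T2}. x2 t \<in> P"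
    using r2 unfolding reaches_def by blast
  define U where "U t = (if t \<le> T1 then u1 t else u2 (t - T1))" for t
  define X where "X t = (if t \<le> T1 then x1 t else x2 (t - T1))" for t
  define f1 where "f1 s = A *v x1 s + a + B *v u1 s" for s
  define f2 where "f2 s = A *v x2 s + a + B *v u2 s" for s
  define f where "f s = A *v X s + a + B *v U s" for s
  have c1: "continuous_on {0..T1} x1" and i1: "\<forall>t\<in>{0..T1}. x1 t = x + integral {0..t} f1"
    using s1 unfolding is_solution_def f1_def by auto
  have c2: "continuous_on {0..T2} x2" and i2: "\<forall>t\<in>{0..T2}. x2 t = y + integral {0..t} f2"
    using s2 unfolding is_solution_def f2_def by auto
  have x20: "x2 0 = y" using i2 T2 by auto
  have pc: "piecewise_continuous_on (T1+T2) U"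
    unfolding U_def by (rule pc_append[OF pc1 pc2])
  have cX: "continuous_on {0..T1+T2} X"
  proof -
    have a1: "continuous_on {t \<in> {0..T1+T2}. t \<le> T1} x1"
      by (rule continuous_on_subset[OF c1]) auto
    have a2: "continuous_on {t \<in> {0..T1+T2}. T1 \<le> t} (\<lambda>t. x2 (t - T1))"
      by (rule continuous_on_compose2[OF c2]) (auto intro!: continuous_intros)
    show ?thesis unfolding X_def
      by (rule continuous_on_cases_le[OF a1 a2]) (auto intro!: continuous_intros simp: x20 e1)
  qed
  have fi1: "f1 integrable_on {0..T1}"
    unfolding f1_def by (rule sol_integrable[OF pc1 c1]) (use T1 in auto)
  have fi2: "f2 integrable_on {0..t}" if "0 \<le> t" "t \<le> T2" for t
    unfolding f2_def by (rule sol_integrable[OF pc2 c2 that])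
  have ff1: "f s = f1 s" if "s \<le> T1" for s using that by (simp add: f_def f1_def X_def U_def)
  have ff2: "f s = f2 (s - T1)" if "s > T1" for s using that by (simp add: f_def f2_def X_def U_def)
  have sol: "X t = x + integral {0..t} f" if t: "t \<in> {0..T1+T2}" for t
  proof (cases "t \<le> T1")
    case True
    have "integral {0..t} f = integral {0..t} f1" by (rule integral_cong) (use True ff1 in auto)
    then show ?thesis using True t i1 by (simp add: X_def)
  next
    case False
    have fA: "f integrable_on {0..T1}"
      using fi1 by (rule integrable_spike_finite[of "{}", rotated 2]) (use ff1 in auto)
    have shift: "integral {0..t-T1} (f \<circ> (+) T1) = integral {0+T1..(t-T1)+T1} f"
      by (rule integral_shift_Icc_real)
    have fB0: "(f \<circ> (+) T1) integrable_on {0..t-T1}"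
    proof -
      have "f2 integrable_on {0..t-T1}" using fi2[of "t - T1"] False t by auto
      moreover have "(f \<circ> (+) T1) x = f2 x" if "x \<in> {0..t-T1} - {0}" for x
        using that ff2[of "T1 + x"] by auto
      ultimately show ?thesis using integrable_spike_finite[of "{0}" "{0..t-T1}" "f \<circ> (+) T1" f2] by blast
    qed
    have fB: "f integrable_on {T1..t}"
      using integrable_on_shift_cbox[of f T1 0 "t-T1"] fB0 by simp
    have eqB: "integral {0..t-T1} (f \<circ> (+) T1) = integral {0..t-T1} f2"
      by (rule integral_spike[of "{0}"]) (use ff2 in \<open>auto simp: o_def\<close>)
    have "integral {0..t} f = integral {0..T1} f + integral {T1..t} f"
      using Henstock_Kurzweil_Integration.integral_combine[of 0 T1 t f]
        Henstock_Kurzweil_Integration.integrable_combine[of 0 T1 t f] fA fB T1 False by simp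
    moreover have "integral {0..T1} f = integral {0..T1} f1" by (rule integral_cong) (use ff1 in auto)
    moreover have "integral {0..T1} f1 = y - x" using i1 e1 T1 by force
    moreover have "integral {0..t-T1} f2 = x2 (t - T1) - y" using i2 t False by force
    ultimately show ?thesis using shift eqB False by (simp add: X_def) (metis add.commute diff_add_cancel)
  qed
  show ?thesis unfolding reaches_def
  proof (intro exI conjI)
    show "0 \<le> T1 + T2" using T1 T2 by simp
    show "piecewise_continuous_on (T1+T2) U" by fact
    show "is_solution A a B U x (T1 + T2) X" unfolding is_solution_def using cX sol by (auto simp: f_def[abs_def])
    show "X (T1 + T2) \<in> F" using e2 T2 e1 x20 by (cases "T2 = 0") (auto simp: X_def)
    show "\<forall>t\<in>{0..T1 + T2}. X t \<in> P" using in1 in2 by (auto simp: X_def)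
  qed
qed

locale sysP =
  fixes A :: "real^'n^'n" and a :: "real^'n" and B :: "real^'m^'n" and \<beta> :: "real^'n"
  assumes Bperp: "\<And>u. \<beta> \<bullet> (B *v u) = 0"
begin

definition g :: "real^'n \<Rightarrow> real" where "g x = \<beta> \<bullet> (A *v x + a)"

lemma g_comb: "g ((1 - (t::real)) *\<^sub>R p + t *\<^sub>R q) = (1 - t) * g p + t * g q"
  unfolding g_def by (simp add: algebra_simps inner_add_right inner_diff_right)

lemma ell_int:
  assumes pc: "piecewise_continuous_on T u" and sol: "is_solution A a B u x0 T X"
    and t: "t \<in> {0..T}"
  shows "\<beta> \<bullet> X t = \<beta> \<bullet> x0 + integral {0..t} (\<lambda>s. g (X s))"
proof -
  have c: "continuous_on {0..T} X" and i: "X t = x0 + integral {0..t} (\<lambda>s. A *v X s + a + B *v u s)"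
    using sol t unfolding is_solution_def by auto
  have int: "(\<lambda>s. A *v X s + a + B *v u s) integrable_on {0..t}"
    by (rule sol_integrable[OF pc c]) (use t in auto)
  have "\<beta> \<bullet> integral {0..t} (\<lambda>s. A *v X s + a + B *v u s)
      = integral {0..t} ((\<lambda>v. \<beta> \<bullet> v) \<circ> (\<lambda>s. A *v X s + a + B *v u s))"
    by (rule integral_linear[OF int bounded_linear_inner_right, symmetric])
  also have "\<dots> = integral {0..t} (\<lambda>s. g (X s))"
    by (rule integral_cong) (simp add: g_def inner_add_right Bperp)
  finally show ?thesis using i by (simp add: inner_add_right)
qed

lemma gX_cont:
  assumes "continuous_on {0..T} X"
  shows "continuous_on {0..T} (\<lambda>s. g (X s))"
  unfolding g_def
  by (intro continuous_intros bounded_linear.continuous_on[OF matrix_vector_mul_bounded_linear assms])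

lemma ell_diff:
  assumes pc: "piecewise_continuous_on T u" and sol: "is_solution A a B u x0 T X"
    and t: "0 \<le> t1" "t1 \<le> t2" "t2 \<le> T"
  shows "\<beta> \<bullet> X t2 - \<beta> \<bullet> X t1 = integral {t1..t2} (\<lambda>s. g (X s))"
proof -
  have c: "continuous_on {0..T} X" using sol unfolding is_solution_def by auto
  have ci: "(\<lambda>s. g (X s)) integrable_on {0..t2}"
    by (rule integrable_continuous_real, rule continuous_on_subset[OF gX_cont[OF c]]) (use t in auto)
  have "integral {0..t1} (\<lambda>s. g (X s)) + integral {t1..t2} (\<lambda>s. g (X s)) = integral {0..t2} (\<lambda>s. g (X s))"
    using Henstock_Kurzweil_Integration.integral_combine[OF t(1,2) ci] .
  then show ?thesis using ell_int[OF pc sol, of t1] ell_int[OF pc sol, of t2] t by auto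
qed

lemma ell_deriv:
  assumes pc: "piecewise_continuous_on T u" and sol: "is_solution A a B u x0 T X"
    and s: "0 < s" "s < T"
  shows "((\<lambda>t. \<beta> \<bullet> X t) has_real_derivative g (X s)) (at s)"
proof -
  have c: "continuous_on {0..T} X" using sol unfolding is_solution_def by auto
  have "((\<lambda>t. integral {0..t} (\<lambda>s. g (X s))) has_vector_derivative g (X s)) (at s within {0..T})"
    by (rule integral_has_vector_derivative[OF gX_cont[OF c]]) (use s in auto)
  then have d: "((\<lambda>t. \<beta> \<bullet> x0 + integral {0..t} (\<lambda>s. g (X s))) has_real_derivative g (X s)) (at s)"
    using s at_within_Icc_at[of 0 s T]
    by (auto simp: has_real_derivative_iff_has_vector_derivative intro!: derivative_eq_intros)
  show ?thesis
    by (rule has_field_derivative_transform_within_open[OF d, of "{0<..<T}"])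
       (use s ell_int[OF pc sol] in auto)
qed

lemma ell_const:
  assumes pc: "piecewise_continuous_on T u" and sol: "is_solution A a B u x0 T X"
    and inP: "\<forall>t\<in>{0..T}. X t \<in> P" and gsign: "\<forall>x\<in>P. g x \<le> 0"
    and t1: "t1 \<in> {0..T}" and lt: "t1 < T" and le: "\<beta> \<bullet> X t1 \<le> \<beta> \<bullet> X T"
    and s: "s \<in> {t1..T}"
  shows "g (X s) = 0 \<and> \<beta> \<bullet> X s = \<beta> \<bullet> X t1"
proof -
  have c: "continuous_on {0..T} X" using sol unfolding is_solution_def by auto
  have gc: "continuous_on {t1..T} (\<lambda>s. g (X s))"
    by (rule continuous_on_subset[OF gX_cont[OF c]]) (use t1 in auto)
  have gi: "(\<lambda>s. g (X s)) integrable_on {t1..T}" using gc by (rule integrable_continuous_real)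
  have I: "\<beta> \<bullet> X T - \<beta> \<bullet> X t1 = integral {t1..T} (\<lambda>s. g (X s))"
    by (rule ell_diff[OF pc sol]) (use t1 in auto)
  have "integral {t1..T} (\<lambda>s. g (X s)) \<le> integral {t1..T} (\<lambda>s. 0::real)"
    by (rule integral_le[OF gi]) (use inP gsign t1 in auto)
  then have I0: "integral {t1..T} (\<lambda>s. g (X s)) = 0" using I le by simp
  have z: "g (X s') = 0" if "s' \<in> {t1..T}" for s'
  proof -
    have "(\<lambda>s. - g (X s)) x = 0" if "x \<in> cbox t1 T" for x
    proof (rule has_integral_0_cbox_imp_0[of t1 T "\<lambda>s. - g (X s)"])
      show "continuous_on (cbox t1 T) (\<lambda>s. - g (X s))" using gc by (auto intro: continuous_intros)
      show "\<And>x. x \<in> box t1 T \<Longrightarrow> 0 \<le> - g (X x)" using inP gsign t1 by force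
      show "((\<lambda>s. - g (X s)) has_integral 0) (cbox t1 T)"
        using has_integral_neg[OF integrable_integral[OF gi]] I0 by simp
      show "box t1 T \<noteq> {}" using lt by simp
    qed (use that in auto)
    then show ?thesis using that by simp
  qed
  have "\<beta> \<bullet> X s - \<beta> \<bullet> X t1 = integral {t1..s} (\<lambda>s. g (X s))"
    by (rule ell_diff[OF pc sol]) (use t1 s in auto)
  also have "\<dots> = integral {t1..s} (\<lambda>s. 0)" by (rule integral_cong) (use z s in auto)
  finally show ?thesis using z s by simp
qed

lemma gronwall:
  assumes pc: "piecewise_continuous_on T u" and sol: "is_solution A a B u x0 T X"
    and inP: "\<forall>t\<in>{0..T}. X t \<in> P"
    and t1: "t1 \<in> {0..T}" and mx: "\<forall>y\<in>P. \<beta> \<bullet> y \<le> \<beta> \<bullet> X t1"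
    and bd: "\<forall>y\<in>P. - g y \<le> C * (\<beta> \<bullet> X t1 - \<beta> \<bullet> y)"
    and s: "s \<in> {t1..T}"
  shows "\<beta> \<bullet> X s = \<beta> \<bullet> X t1"
proof -
  define L where "L = \<beta> \<bullet> X t1"
  define k where "k t = exp (- C * t) * (L - \<beta> \<bullet> X t)" for t
  have c: "continuous_on {0..T} X" using sol unfolding is_solution_def by auto
  have "k t1 \<ge> k s"
  proof (rule DERIV_nonpos_imp_decreasing_open[of t1 s k])
    show "t1 \<le> s" using s by simp
    show "continuous_on {t1..s} k" unfolding k_def
      by (intro continuous_intros bounded_linear.continuous_on[OF bounded_linear_inner_right]
          continuous_on_subset[OF c]) (use t1 s in auto)
    fix x assume x: "t1 < x" "x < s"
    have d: "((\<lambda>t. \<beta> \<bullet> X t) has_real_derivative g (X x)) (at x)"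
      by (rule ell_deriv[OF pc sol]) (use x t1 s in auto)
    have "X x \<in> P" using inP x t1 s by auto
    then have le: "- g (X x) - C * (L - \<beta> \<bullet> X x) \<le> 0" using bd L_def by force
    have "(k has_real_derivative (exp (- C * x) * (- C) * (L - \<beta> \<bullet> X x) + exp (- C * x) * (- g (X x)))) (at x)"
      unfolding k_def by (auto intro!: derivative_eq_intros d)
    moreover have "exp (- C * x) * (- C) * (L - \<beta> \<bullet> X x) + exp (- C * x) * (- g (X x))
        = exp (- C * x) * (- g (X x) - C * (L - \<beta> \<bullet> X x))" by (simp add: algebra_simps)
    moreover have "exp (- C * x) * (- g (X x) - C * (L - \<beta> \<bullet> X x)) \<le> 0"
      using le by (simp add: mult_nonneg_nonpos)
    ultimately show "\<exists>y. DERIV k x :> y \<and> y \<le> 0" by auto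
  qed
  then have "exp (- C * s) * (L - \<beta> \<bullet> X s) \<le> 0" by (simp add: k_def L_def)
  then have "L - \<beta> \<bullet> X s \<le> 0" by (simp add: mult_le_0_iff)
  moreover have "\<beta> \<bullet> X s \<le> L" using mx inP s t1 L_def by auto
  ultimately show ?thesis unfolding L_def by simp
qed

lemma vertex_bound:
  assumes poly: "polytope P" and mx: "\<forall>y\<in>P. \<beta> \<bullet> y \<le> L"
    and top: "\<forall>y\<in>P. \<beta> \<bullet> y = L \<longrightarrow> g y = 0" and gsign: "\<forall>y\<in>P. g y \<le> 0"
  shows "\<exists>C. \<forall>y\<in>P. - g y \<le> C * (L - \<beta> \<bullet> y)"
proof -
  obtain V where V: "finite V" "P = convex hull V" using poly unfolding polytope_def by blast
  define W where "W = {v\<in>V. \<beta> \<bullet> v < L}"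
  define C where "C = (\<Sum>v\<in>W. (- g v) / (L - \<beta> \<bullet> v))"
  have VP: "v \<in> P" if "v \<in> V" for v using that V by (simp add: hull_inc)
  have vb: "- g v \<le> C * (L - \<beta> \<bullet> v)" if v: "v \<in> V" for v
  proof (cases "\<beta> \<bullet> v = L")
    case True then show ?thesis using top VP[OF v] by simp
  next
    case False
    then have vW: "v \<in> W" using mx VP[OF v] v by (force simp: W_def)
    have pos: "L - \<beta> \<bullet> v > 0" using vW by (simp add: W_def)
    have "(- g v) / (L - \<beta> \<bullet> v) \<le> C" unfolding C_def
    proof (rule member_le_sum[OF vW])
      show "finite W" using V(1) by (simp add: W_def)
      fix x assume "x \<in> W - {v}"
      then have "x \<in> P" "\<beta> \<bullet> x < L" using VP by (auto simp: W_def)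
      then show "0 \<le> - g x / (L - \<beta> \<bullet> x)" using gsign by (auto intro!: divide_nonpos_pos)
    qed
    then show ?thesis using pos by (simp add: pos_divide_le_eq neg_divide_le_eq field_simps)
  qed
  have cvx: "convex {y. - g y \<le> C * (L - \<beta> \<bullet> y)}"
    unfolding convex_def
  proof (intro allI impI ballI, clarsimp)
    fix x y :: "real^'n" and u v :: real
    assume xy: "- g x \<le> C * (L - \<beta> \<bullet> x)" "- g y \<le> C * (L - \<beta> \<bullet> y)" and uv: "0 \<le> u" "0 \<le> v" "u + v = 1"
    have u: "u = 1 - v" using uv by simp
    have "- g (u *\<^sub>R x + v *\<^sub>R y) = u * (- g x) + v * (- g y)" using g_comb[of v x y] u by simp
    also have "\<dots> \<le> u * (C * (L - \<beta> \<bullet> x)) + v * (C * (L - \<beta> \<bullet> y))"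
      using xy uv by (intro add_mono mult_left_mono) auto
    also have "\<dots> = C * (L - \<beta> \<bullet> (u *\<^sub>R x + v *\<^sub>R y))"
      by (simp add: algebra_simps inner_add_right u)
    finally show "- g (u *\<^sub>R x + v *\<^sub>R y) \<le> C * (L - \<beta> \<bullet> (u *\<^sub>R x + v *\<^sub>R y))" .
  qed
  have "P \<subseteq> {y. - g y \<le> C * (L - \<beta> \<bullet> y)}"
    unfolding V(2) by (rule hull_minimal) (use vb cvx in auto)
  then show ?thesis by blast
qed

end

locale setting = sysP A a B \<beta> for A :: "real^'n^'n" and a and B :: "real^'m^'n" and \<beta> +
  fixes P :: "(real^'n) set" and e :: "real^'n"
  assumes Bsurj: "\<And>y. \<beta> \<bullet> y = 0 \<Longrightarrow> \<exists>u. B *v u = y"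
    and cvx: "convex P" and gsign: "\<forall>x\<in>P. g x \<le> 0"
    and e0: "\<beta> \<bullet> e = 0" and e1: "\<beta> \<bullet> (A *v e) = 1"
begin

lemma g_e: "g (x + t *\<^sub>R e) = g x + t"
  unfolding g_def using e1 by (simp add: matrix_vector_right_distrib matrix_vector_mult_scaleR inner_add_right algebra_simps)

lemma l_e: "\<beta> \<bullet> (x + t *\<^sub>R e) = \<beta> \<bullet> x"
  using e0 by (simp add: inner_add_right)

lemma e_nz: "e \<noteq> 0" using e1 by auto

lemma bezier:
  assumes P: "p \<in> P" "r \<in> P" "q \<in> P" and tau: "\<tau> > 0"
    and h1: "\<beta> \<bullet> (r - p) = \<tau>/2 * g p" and h2: "\<beta> \<bullet> (q - r) = \<tau>/2 * g q"
    and h3: "g r = (g p + g q)/2"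
  shows "reaches A a B P p {q}"
proof -
  define X where "X t = p + (2*(t/\<tau>)) *\<^sub>R (r - p) + ((t/\<tau>)^2) *\<^sub>R (p - 2 *\<^sub>R r + q)" for t
  define X' where "X' t = (2/\<tau>) *\<^sub>R (r - p) + (2*t/\<tau>^2) *\<^sub>R (p - 2 *\<^sub>R r + q)" for t
  define Y0 where "Y0 = (2/\<tau>) *\<^sub>R (r - p) - A *v p - a"
  define Y1 where "Y1 = (2/\<tau>) *\<^sub>R (p - 2 *\<^sub>R r + q) - 2 *\<^sub>R (A *v (r - p))"
  define Y2 where "Y2 = - (A *v (p - 2 *\<^sub>R r + q))"
  have gp: "g p = \<beta> \<bullet> (A *v p) + \<beta> \<bullet> a" and gq: "g q = \<beta> \<bullet> (A *v q) + \<beta> \<bullet> a"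
    and gr: "g r = \<beta> \<bullet> (A *v r) + \<beta> \<bullet> a" by (simp_all add: g_def inner_add_right)
  have "\<beta> \<bullet> Y0 = 0" using h1 tau unfolding Y0_def gp
    by (simp add: inner_diff_right inner_add_right field_simps)
  then obtain U0 where U0: "B *v U0 = Y0" using Bsurj by blast
  have "\<beta> \<bullet> Y2 = 0" using h3 unfolding Y2_def gp gq gr
    by (simp add: inner_diff_right inner_add_right matrix_vector_right_distrib matrix_vector_mult_diff_distrib algebra_simps)
  then obtain U2 where U2: "B *v U2 = Y2" using Bsurj by blast
  have e1: "\<beta> \<bullet> (q - r) - \<beta> \<bullet> (r - p) = \<tau>/2 * (g q - g p)" using h1 h2 by (simp add: algebra_simps)
  have "\<beta> \<bullet> Y1 = (2/\<tau>) * (\<beta> \<bullet> (q - r) - \<beta> \<bullet> (r - p)) - 2 * (g r - g p)"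
    unfolding Y1_def gp gr
    by (simp add: inner_diff_right inner_add_right matrix_vector_right_distrib matrix_vector_mult_diff_distrib algebra_simps)
  also have "\<dots> = 0" using e1 h3 tau by (simp add: field_simps)
  finally obtain U1 where U1: "B *v U1 = Y1" using Bsurj by blast
  define u where "u t = U0 + (t/\<tau>) *\<^sub>R U1 + ((t/\<tau>)^2) *\<^sub>R U2" for t
  have eq: "A *v X t + a + B *v u t = X' t" for t
    unfolding u_def U0[symmetric] U1[symmetric] U2[symmetric] X_def X'_def
    using tau
    by (simp add: matrix_vector_right_distrib matrix_vector_mult_diff_distrib
        matrix_vector_mult_scaleR U0 U1 U2 Y0_def Y1_def Y2_def algebra_simps power2_eq_square
        field_simps)
  have der: "(X has_vector_derivative X' t) (at t)" for t
  proof -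
    have d1: "((\<lambda>t. 2*(t/\<tau>)) has_field_derivative 2/\<tau>) (at t)"
      using tau by (auto intro!: derivative_eq_intros)
    have d2: "((\<lambda>t. (t/\<tau>)^2) has_field_derivative 2*t/\<tau>^2) (at t)"
      using tau by (auto intro!: derivative_eq_intros simp: power2_eq_square)
    have "((\<lambda>t. p + (2*(t/\<tau>)) *\<^sub>R (r - p) + ((t/\<tau>)^2) *\<^sub>R (p - 2 *\<^sub>R r + q)) has_vector_derivative
       (0 + ((2*(t/\<tau>)) *\<^sub>R 0 + (2/\<tau>) *\<^sub>R (r - p)) + (((t/\<tau>)^2) *\<^sub>R 0 + (2*t/\<tau>^2) *\<^sub>R (p - 2 *\<^sub>R r + q)))) (at t)"
      by (intro has_vector_derivative_add has_vector_derivative_scaleR d1 d2 has_vector_derivative_const)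
    then show ?thesis unfolding X_def[abs_def] X'_def by simp
  qed
  have sol: "is_solution A a B u p \<tau> X"
    unfolding is_solution_def
  proof
    show "continuous_on {0..\<tau>} X" unfolding X_def using tau by (auto intro!: continuous_intros)
    show "\<forall>t\<in>{0..\<tau>}. X t = p + integral {0..t} (\<lambda>s. A *v X s + a + B *v u s)"
    proof
      fix t assume t: "t \<in> {0..\<tau>}"
      have "(X' has_integral (X t - X 0)) {0..t}"
        by (rule fundamental_theorem_of_calculus) (use t der in \<open>auto intro: has_vector_derivative_at_within\<close>)
      then have "integral {0..t} X' = X t - X 0" by (rule integral_unique)
      moreover have "X 0 = p" by (simp add: X_def)
      ultimately show "X t = p + integral {0..t} (\<lambda>s. A *v X s + a + B *v u s)"
        unfolding eq by simp
    qed
  qed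
  have pc: "piecewise_continuous_on \<tau> u"
    unfolding piecewise_continuous_on_def
    apply (rule exI[of _ "[0, \<tau>]"])
    using tau by (auto intro!: exI[of _ u] simp: u_def intro!: continuous_intros)
  have inP: "X t \<in> P" if "t \<in> {0..\<tau>}" for t
  proof -
    define s where "s = t/\<tau>"
    have s: "0 \<le> s" "s \<le> 1" using that tau by (auto simp: s_def)
    have "X t = (1-s)^2 *\<^sub>R p + (2 * s * (1-s)) *\<^sub>R r + s^2 *\<^sub>R q"
      unfolding X_def s_def[symmetric] by (simp add: algebra_simps power2_eq_square)
    also have "\<dots> \<in> convex hull {p, r, q}"
      unfolding convex_hull_3
      apply (rule CollectI)
      apply (rule exI[of _ "(1-s)^2"], rule exI[of _ "2 * s * (1-s)"], rule exI[of _ "s^2"])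
      using s mult_left_le_one_le[of s s] mult_nonneg_nonneg[of "1-s" "1-s"]
      by (auto simp: algebra_simps power2_eq_square)
    also have "convex hull {p, r, q} \<subseteq> P" using P cvx by (simp add: hull_minimal)
    finally show ?thesis .
  qed
  have "X \<tau> = q" using tau by (simp add: X_def scaleR_2 algebra_simps del: scaleR_collapse)
  then show ?thesis unfolding reaches_def
    using tau sol pc inP by (auto intro!: exI[of _ u] exI[of _ \<tau>] exI[of _ X])
qed

lemma bez2:
  assumes P: "p \<in> P" "r \<in> P" "q \<in> P" and lq: "\<beta> \<bullet> q < \<beta> \<bullet> p" and gs: "g p + g q < 0"
    and lr: "\<beta> \<bullet> r = \<beta> \<bullet> p + g p * (\<beta> \<bullet> q - \<beta> \<bullet> p) / (g p + g q)"
    and gr: "g r = (g p + g q)/2"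
  shows "reaches A a B P p {q}"
proof (rule bezier[OF P, of "2 * (\<beta> \<bullet> q - \<beta> \<bullet> p) / (g p + g q)"])
  show "0 < 2 * (\<beta> \<bullet> q - \<beta> \<bullet> p) / (g p + g q)" using lq gs by (simp add: divide_neg_neg)
  show "\<beta> \<bullet> (r - p) = 2 * (\<beta> \<bullet> q - \<beta> \<bullet> p) / (g p + g q) / 2 * g p"
    using lr gs by (simp add: inner_diff_right field_simps)
  show "\<beta> \<bullet> (q - r) = 2 * (\<beta> \<bullet> q - \<beta> \<bullet> p) / (g p + g q) / 2 * g q"
    using lr gs by (simp add: inner_diff_right field_simps)
  show "g r = (g p + g q) / 2" by fact
qed

lemma gm:
  assumes P: "p \<in> P" "q \<in> P" and lq: "\<beta> \<bullet> q < \<beta> \<bullet> p" and gp: "g p \<le> 0" and gq: "g q \<le> 0"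
    and gs: "g p + g q < 0"
    and bl: "ball ((1 - g p/(g p + g q)) *\<^sub>R p + (g p/(g p + g q)) *\<^sub>R q) \<rho> \<subseteq> P"
    and sm: "(g p - g q)^2 * norm e < \<rho> * (-2 * (g p + g q))"
  shows "reaches A a B P p {q}"
proof -
  define \<theta> where "\<theta> = g p/(g p + g q)"
  define C where "C = (1 - \<theta>) *\<^sub>R p + \<theta> *\<^sub>R q"
  define \<delta> where "\<delta> = (g p + g q)/2 - g C"
  have gC: "g C = (1 - \<theta>) * g p + \<theta> * g q" unfolding C_def by (rule g_comb)
  have S: "g p + g q \<noteq> 0" using gs by simp
  have t1: "1 - \<theta> = g q / (g p + g q)" using S by (simp add: \<theta>_def field_simps)
  have gC2: "g C = 2 * g p * g q / (g p + g q)"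
  proof -
    have "g C = g q / (g p + g q) * g p + g p / (g p + g q) * g q" using gC t1 by (simp add: \<theta>_def)
    also have "\<dots> = 2 * g p * g q / (g p + g q)" by (simp add: add_divide_distrib[symmetric])
    finally show ?thesis .
  qed
  have d0: "\<delta> = ((g p + g q)^2 - 4 * g p * g q) / (2 * (g p + g q))"
    using S by (simp add: \<delta>_def gC2 field_simps power2_eq_square)
  have "(g p + g q)^2 - 4 * g p * g q = (g p - g q)^2" by (simp add: power2_eq_square algebra_simps)
  then have d: "\<delta> = (g p - g q)^2 / (2 * (g p + g q))" using d0 by simp
  define r where "r = C + \<delta> *\<^sub>R e"
  have "norm (r - C) = \<bar>\<delta>\<bar> * norm e" by (simp add: r_def)
  also have "\<bar>\<delta>\<bar> = (g p - g q)^2 / (-2 * (g p + g q))" using gs unfolding d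
    by (simp add: abs_div abs_mult)
  finally have "norm (r - C) * (-2 * (g p + g q)) = (g p - g q)^2 * norm e" using gs by simp
  then have "norm (r - C) * (-2 * (g p + g q)) < \<rho> * (-2 * (g p + g q))" using sm by simp
  then have "norm (r - C) < \<rho>" by (rule mult_right_less_imp_less) (use gs in simp)
  then have rP: "r \<in> P" using bl unfolding C_def \<theta>_def by (auto simp: dist_norm norm_minus_commute)
  show ?thesis
  proof (rule bez2[OF P(1) rP P(2) lq gs])
    show "\<beta> \<bullet> r = \<beta> \<bullet> p + g p * (\<beta> \<bullet> q - \<beta> \<bullet> p) / (g p + g q)"
    proof -
      have "\<beta> \<bullet> r = (1-\<theta>) * (\<beta> \<bullet> p) + \<theta> * (\<beta> \<bullet> q)" unfolding r_def l_e C_def by (simp add: inner_add_right)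
      also have "\<dots> = \<beta> \<bullet> p + \<theta> * (\<beta> \<bullet> q - \<beta> \<bullet> p)" by (simp add: algebra_simps)
      finally show ?thesis unfolding \<theta>_def by simp
    qed
    show "g r = (g p + g q) / 2" unfolding r_def g_e \<delta>_def by simp
  qed
qed

end

lemma comb2:
  fixes u v :: "'a::real_vector"
  shows "(1-t) *\<^sub>R ((1-a) *\<^sub>R u + a *\<^sub>R v) + t *\<^sub>R ((1-b) *\<^sub>R u + b *\<^sub>R v)
    = (1 - ((1-t)*a + t*b)) *\<^sub>R u + ((1-t)*a + t*b) *\<^sub>R v"
  by (simp add: algebra_simps)

context setting begin

lemma ball_shrink:
  assumes y: "y \<in> P" and bc: "ball c \<rho> \<subseteq> P" and k: "0 \<le> \<kappa>" "\<kappa> \<le> 1"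
  shows "ball ((1-\<kappa>) *\<^sub>R y + \<kappa> *\<^sub>R c) (\<kappa>*\<rho>) \<subseteq> P"
proof
  fix z assume z: "z \<in> ball ((1-\<kappa>) *\<^sub>R y + \<kappa> *\<^sub>R c) (\<kappa>*\<rho>)"
  define w where "w = (1-\<kappa>) *\<^sub>R y + \<kappa> *\<^sub>R c"
  have kp: "\<kappa> > 0" using z k by (cases "\<kappa> = 0") auto
  have "dist c (c + (1/\<kappa>) *\<^sub>R (z - w)) = norm (z - w) / \<kappa>" using kp by (simp add: dist_norm)
  also have "\<dots> < \<rho>" using z kp by (simp add: w_def dist_norm norm_minus_commute pos_divide_less_eq mult.commute)
  finally have "c + (1/\<kappa>) *\<^sub>R (z - w) \<in> P" using bc by auto
  then have "(1-\<kappa>) *\<^sub>R y + \<kappa> *\<^sub>R (c + (1/\<kappa>) *\<^sub>R (z - w)) \<in> P"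
    using cvx y k by (intro convexD) auto
  also have "(1-\<kappa>) *\<^sub>R y + \<kappa> *\<^sub>R (c + (1/\<kappa>) *\<^sub>R (z - w)) = z"
    using kp by (simp add: w_def algebra_simps)
  finally show "z \<in> P" .
qed

lemma ball_seg:
  assumes bu: "ball u \<rho> \<subseteq> P" and bv: "ball v \<rho> \<subseteq> P" and s: "0 \<le> s" "s \<le> 1"
  shows "ball ((1-s) *\<^sub>R u + s *\<^sub>R v) \<rho> \<subseteq> P"
proof
  fix z assume z: "z \<in> ball ((1-s) *\<^sub>R u + s *\<^sub>R v) \<rho>"
  define d where "d = z - ((1-s) *\<^sub>R u + s *\<^sub>R v)"
  have "u + d \<in> P" "v + d \<in> P" using z bu bv by (auto simp: d_def dist_norm norm_minus_commute)
  then have "(1-s) *\<^sub>R (u + d) + s *\<^sub>R (v + d) \<in> P" using cvx s by (intro convexD) auto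
  also have "(1-s) *\<^sub>R (u + d) + s *\<^sub>R (v + d) = z" by (simp add: d_def algebra_simps)
  finally show "z \<in> P" .
qed

lemma ballneg:
  assumes "ball z \<rho> \<subseteq> P" "\<rho> > 0"
  shows "g z < 0"
proof -
  define t where "t = \<rho> / (2 * norm e)"
  have ne: "norm e > 0" using e_nz by simp
  have t: "t > 0" using assms ne by (simp add: t_def)
  have "dist z (z + t *\<^sub>R e) = t * norm e" using t by (simp add: dist_norm)
  also have "\<dots> < \<rho>" using ne assms by (simp add: t_def)
  finally have "z + t *\<^sub>R e \<in> P" using assms by auto
  then have "g z + t \<le> 0" using gsign g_e by metis
  then show ?thesis using t by simp
qed

lemma ball_center: "ball z \<rho> \<subseteq> P \<Longrightarrow> \<rho> > 0 \<Longrightarrow> z \<in> P" by auto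

lemma ic:
  assumes lt: "\<beta> \<bullet> v0 < \<beta> \<bullet> u0" and rho: "\<rho> > 0"
    and bl: "\<forall>s\<in>{0..1}. ball ((1-s) *\<^sub>R u0 + s *\<^sub>R v0) \<rho> \<subseteq> P"
  shows "reaches A a B P u0 {v0}"
proof -
  define D where "D = \<bar>g v0 - g u0\<bar>"
  obtain N :: nat where N: "D * norm e / \<rho> + 1 < real N" using reals_Archimedean2 by blast
  have "D * norm e / \<rho> \<ge> 0" using rho by (simp add: D_def)
  then have Np: "real N > 0" using N by linarith
  have ND: "D * norm e < \<rho> * real N" using N rho by (simp add: field_simps)
  define w where "w k = (1 - real k / real N) *\<^sub>R u0 + (real k / real N) *\<^sub>R v0" for k
  have wb: "ball (w k) \<rho> \<subseteq> P" if "k \<le> N" for k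
    using bl that Np unfolding w_def by auto
  have gw: "g (w k) = g u0 + (real k / real N) * (g v0 - g u0)" for k
    unfolding w_def g_comb by (simp add: algebra_simps)
  have lw: "\<beta> \<bullet> w k = \<beta> \<bullet> u0 + (real k / real N) * (\<beta> \<bullet> v0 - \<beta> \<bullet> u0)" for k
    unfolding w_def by (simp add: algebra_simps inner_add_right)
  have step: "reaches A a B P (w k) {w (Suc k)}" if k: "Suc k \<le> N" for k
  proof -
    define p where "p = w k"
    define q where "q = w (Suc k)"
    have pP: "p \<in> P" and qP: "q \<in> P" using wb[of k] wb[of "Suc k"] k rho by (auto simp: p_def q_def)
    have gpn: "g p < 0" and gqn: "g q < 0" using ballneg wb[of k] wb[of "Suc k"] k rho by (auto simp: p_def q_def)
    have lq: "\<beta> \<bullet> q < \<beta> \<bullet> p" unfolding p_def q_def lw using lt Np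
      by (simp add: field_simps)
    define \<theta> where "\<theta> = g p / (g p + g q)"
    have th: "0 \<le> \<theta>" "\<theta> \<le> 1" using gpn gqn by (auto simp: \<theta>_def divide_le_eq_1 divide_nonpos_neg)
    define s where "s = (real k + \<theta>) / real N"
    have s: "0 \<le> s" "s \<le> 1" using th k Np by (auto simp: s_def field_simps)
    have "(1-\<theta>) * (real k / real N) + \<theta> * (real (Suc k) / real N) = s"
      unfolding s_def using Np by (simp add: field_simps)
    then have "(1 - \<theta>) *\<^sub>R p + \<theta> *\<^sub>R q = (1 - s) *\<^sub>R u0 + s *\<^sub>R v0"
      unfolding p_def q_def w_def comb2 by simp
    then have bC: "ball ((1 - g p/(g p + g q)) *\<^sub>R p + (g p/(g p + g q)) *\<^sub>R q) \<rho> \<subseteq> P"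
      using bl s by (simp add: \<theta>_def)
    have dpq: "\<bar>g p - g q\<bar> = D / real N" unfolding p_def q_def gw D_def using Np
      by (simp add: algebra_simps abs_mult flip: diff_divide_distrib)
    have sq: "(g p - g q)^2 = \<bar>g p - g q\<bar> * \<bar>g p - g q\<bar>" by (simp add: power2_eq_square)
    have "(g p - g q)^2 * norm e = \<bar>g p - g q\<bar> * (D * norm e / real N)"
      unfolding sq using dpq by simp
    also have "\<dots> \<le> \<bar>g p - g q\<bar> * \<rho>" using ND Np by (intro mult_left_mono) (auto simp: field_simps)
    also have "\<dots> \<le> - (g p + g q) * \<rho>" using gpn gqn rho by (intro mult_right_mono) auto
    also have "\<dots> < \<rho> * (-2 * (g p + g q))" using mult_pos_neg[of \<rho> "g p + g q"] gpn gqn rho by (simp add: algebra_simps)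
    finally have sm: "(g p - g q)^2 * norm e < \<rho> * (-2 * (g p + g q))" .
    show ?thesis unfolding p_def[symmetric] q_def[symmetric]
      by (rule gm[OF pP qP lq _ _ _ bC sm]) (use gpn gqn in auto)
  qed
  have "reaches A a B P u0 {w k}" if "k \<le> N" for k
    using that
  proof (induction k)
    case 0
    have "w 0 = u0" by (simp add: w_def)
    moreover have "u0 \<in> P" using wb[of 0] rho by (auto simp: w_def)
    ultimately show ?case using reaches_refl[of u0 P "{u0}"] by auto
  next
    case (Suc k)
    then show ?case using reaches_trans step by (metis Suc_leD)
  qed
  moreover have "w N = v0" using Np by (simp add: w_def)
  ultimately show ?thesis by auto
qed

end

context setting begin

lemma small_param:
  assumes "K \<ge> 0" "M > (0::real)"
  shows "\<exists>l0>0. l0 \<le> 1 \<and> (\<forall>l. 0 < l \<and> l \<le> l0 \<longrightarrow> l * K < M)"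
proof (intro exI conjI allI impI)
  show "0 < min 1 (M / (K + 1))" using assms by simp
  show "min 1 (M / (K + 1)) \<le> 1" by simp
  fix l assume l: "0 < l \<and> l \<le> min 1 (M / (K + 1))"
  then have "l * (K + 1) \<le> M" using assms by (simp add: le_divide_eq)
  then show "l * K < M" using l by (simp add: algebra_simps)
qed

lemma first_move:
  assumes x0: "x0 \<in> P" and bc: "ball c \<rho> \<subseteq> P" and rho: "\<rho> > 0" and lc: "\<beta> \<bullet> c < \<beta> \<bullet> x0"
    and ns: "g x0 < 0 \<or> (\<exists>z\<in>P. \<beta> \<bullet> z = \<beta> \<bullet> x0 \<and> g z < 0)"
  shows "\<exists>l0>0. \<forall>l. 0 < l \<and> l \<le> l0 \<longrightarrow> reaches A a B P x0 {(1-l) *\<^sub>R x0 + l *\<^sub>R c}"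
proof -
  have gc: "g c < 0" using ballneg[OF bc rho] .
  have cP: "c \<in> P" using bc rho by auto
  have g0: "g x0 \<le> 0" using gsign x0 by auto
  have pl: "(1-l) *\<^sub>R x0 + l *\<^sub>R c \<in> P" if "0 \<le> l" "l \<le> 1" for l
    using cvx x0 cP that by (intro convexD) auto
  have gl: "g ((1-l) *\<^sub>R x0 + l *\<^sub>R c) = (1-l) * g x0 + l * g c" for l by (rule g_comb)
  have ll: "\<beta> \<bullet> ((1-l) *\<^sub>R x0 + l *\<^sub>R c) = (1-l) * (\<beta> \<bullet> x0) + l * (\<beta> \<bullet> c)" for l
    by (simp add: inner_add_right)
  show ?thesis
  proof (cases "g x0 < 0")
    case True
    define K where "K = (g x0 - g c)^2 * norm e"
    obtain l0 where l0: "l0 > 0" "l0 \<le> 1" "\<forall>l. 0 < l \<and> l \<le> l0 \<longrightarrow> l * K < 2 * (- g x0) * \<rho>"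
      using small_param[of K "2 * (- g x0) * \<rho>"] True rho mult_pos_neg[of \<rho> "g x0"] by (auto simp: K_def)
    show ?thesis
    proof (intro exI conjI allI impI)
      show "l0 > 0" by fact
      fix l assume l: "0 < l \<and> l \<le> l0"
      define q where "q = (1-l) *\<^sub>R x0 + l *\<^sub>R c"
      have qP: "q \<in> P" using pl l l0 by (simp add: q_def)
      have gq: "g q = (1-l) * g x0 + l * g c" by (simp add: q_def gl)
      have "(1-l) * g x0 \<le> 0" using True l l0 by (intro mult_nonneg_nonpos) auto
      moreover have "l * g c < 0" using gc l by (simp add: mult_pos_neg)
      ultimately have gqn: "g q < 0" unfolding gq by linarith
      have "l * (\<beta> \<bullet> c) < l * (\<beta> \<bullet> x0)" using lc l by simp
      then have lq: "\<beta> \<bullet> q < \<beta> \<bullet> x0" unfolding q_def ll by (simp add: algebra_simps)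
      define \<theta> where "\<theta> = g x0 / (g x0 + g q)"
      have th: "0 \<le> \<theta>" "\<theta> \<le> 1" using True gqn by (auto simp: \<theta>_def divide_le_eq_1 divide_nonpos_neg)
      have C: "(1 - \<theta>) *\<^sub>R x0 + \<theta> *\<^sub>R q = (1 - \<theta>*l) *\<^sub>R x0 + (\<theta>*l) *\<^sub>R c"
        using comb2[of \<theta> 0 x0 c l] by (simp add: q_def)
      have kl: "0 \<le> \<theta>*l" "\<theta>*l \<le> 1" using th l l0 by (auto intro: mult_le_one)
      have bC0: "ball ((1 - \<theta>) *\<^sub>R x0 + \<theta> *\<^sub>R q) (\<theta>*l*\<rho>) \<subseteq> P"
        using ball_shrink[OF x0 bc kl] unfolding C .
      have bC: "ball ((1 - g x0/(g x0 + g q)) *\<^sub>R x0 + (g x0/(g x0 + g q)) *\<^sub>R q) (\<theta>*l*\<rho>) \<subseteq> P"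
        using bC0 unfolding \<theta>_def .
      have "g x0 - g q = l * (g x0 - g c)" by (simp add: gq algebra_simps)
      then have "(g x0 - g q)^2 * norm e = l * (l * K)" unfolding K_def by (simp add: power_mult_distrib power2_eq_square)
      also have "\<dots> < l * (2 * (- g x0) * \<rho>)" using l0 l by (intro mult_strict_left_mono) auto
      also have "\<dots> = (\<theta>*l*\<rho>) * (-2 * (g x0 + g q))"
      proof -
        have "\<theta> * (g x0 + g q) = g x0" using True gqn by (simp add: \<theta>_def)
        moreover have "(\<theta>*l*\<rho>) * (-2 * (g x0 + g q)) = -2*l*\<rho>*(\<theta> * (g x0 + g q))" by algebra
        ultimately show ?thesis by simp
      qed
      finally have sm: "(g x0 - g q)^2 * norm e < (\<theta>*l*\<rho>) * (-2 * (g x0 + g q))" .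
      show "reaches A a B P x0 {(1-l) *\<^sub>R x0 + l *\<^sub>R c}"
        using gm[OF x0 qP lq _ _ _ bC sm] True gqn by (simp add: q_def)
    qed
  next
    case False
    then have g00: "g x0 = 0" using g0 by simp
    obtain z where z: "z \<in> P" "\<beta> \<bullet> z = \<beta> \<bullet> x0" "g z < 0" using ns False by auto
    obtain l0 where l0: "l0 > 0" "l0 \<le> 1" "\<forall>l. 0 < l \<and> l \<le> l0 \<longrightarrow> l * (- g c) < 2 * (- g z)"
      using small_param[of "- g c" "2 * (- g z)"] gc z by auto
    show ?thesis
    proof (intro exI conjI allI impI)
      show "l0 > 0" by fact
      fix l assume l: "0 < l \<and> l \<le> l0"
      define q where "q = (1-l) *\<^sub>R x0 + l *\<^sub>R c"
      have qP: "q \<in> P" using pl l l0 by (simp add: q_def)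
      have gq: "g q = l * g c" by (simp add: q_def gl g00)
      have gqn: "g q < 0" unfolding gq using gc l by (simp add: mult_pos_neg)
      have "l * (\<beta> \<bullet> c) < l * (\<beta> \<bullet> x0)" using lc l by simp
      then have lq: "\<beta> \<bullet> q < \<beta> \<bullet> x0" unfolding q_def ll by (simp add: algebra_simps)
      define s where "s = l * g c / (2 * g z)"
      have lgc: "l * g c \<le> 0" using gc l by (simp add: mult_pos_neg less_imp_le)
      have "2 * g z \<le> l * g c" using l0 l by auto
      then have s: "0 \<le> s" "s \<le> 1" using lgc z
        by (auto simp: s_def neg_divide_le_eq intro!: divide_nonpos_neg)
      define r where "r = (1-s) *\<^sub>R x0 + s *\<^sub>R z"
      have rP: "r \<in> P" using cvx x0 z s by (simp add: r_def convexD)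
      show "reaches A a B P x0 {(1-l) *\<^sub>R x0 + l *\<^sub>R c}"
        unfolding q_def[symmetric]
      proof (rule bez2[OF x0 rP qP lq])
        show "g x0 + g q < 0" using g00 gqn by simp
        show "\<beta> \<bullet> r = \<beta> \<bullet> x0 + g x0 * (\<beta> \<bullet> q - \<beta> \<bullet> x0) / (g x0 + g q)"
          using z by (simp add: r_def g00 inner_add_right algebra_simps)
        show "g r = (g x0 + g q) / 2"
          unfolding r_def g_comb g00 gq s_def using z by (simp add: field_simps)
      qed
    qed
  qed
qed

lemma last_move:
  assumes f: "f \<in> P" and bc: "ball c \<rho> \<subseteq> P" and rho: "\<rho> > 0" and lc: "\<beta> \<bullet> f < \<beta> \<bullet> c"
    and ns: "g f < 0 \<or> (\<exists>z\<in>P. \<beta> \<bullet> z = \<beta> \<bullet> f \<and> g z < 0)"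
  shows "\<exists>l0>0. \<forall>l. 0 < l \<and> l \<le> l0 \<longrightarrow> reaches A a B P ((1-l) *\<^sub>R f + l *\<^sub>R c) {f}"
proof -
  have gc: "g c < 0" using ballneg[OF bc rho] .
  have cP: "c \<in> P" using bc rho by auto
  have g0: "g f \<le> 0" using gsign f by auto
  have pl: "(1-l) *\<^sub>R f + l *\<^sub>R c \<in> P" if "0 \<le> l" "l \<le> 1" for l
    using cvx f cP that by (intro convexD) auto
  have gl: "g ((1-l) *\<^sub>R f + l *\<^sub>R c) = (1-l) * g f + l * g c" for l by (rule g_comb)
  have ll: "\<beta> \<bullet> ((1-l) *\<^sub>R f + l *\<^sub>R c) = (1-l) * (\<beta> \<bullet> f) + l * (\<beta> \<bullet> c)" for l
    by (simp add: inner_add_right)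
  show ?thesis
  proof (cases "g f < 0")
    case True
    define K where "K = (g c - g f)^2 * norm e"
    obtain l0 where l0: "l0 > 0" "l0 \<le> 1" "\<forall>l. 0 < l \<and> l \<le> l0 \<longrightarrow> l * K < 2 * (- g f) * \<rho>"
      using small_param[of K "2 * (- g f) * \<rho>"] True rho mult_pos_neg[of \<rho> "g f"] by (auto simp: K_def)
    show ?thesis
    proof (intro exI conjI allI impI)
      show "l0 > 0" by fact
      fix l assume l: "0 < l \<and> l \<le> l0"
      define p where "p = (1-l) *\<^sub>R f + l *\<^sub>R c"
      have pP: "p \<in> P" using pl l l0 by (simp add: p_def)
      have gp: "g p = (1-l) * g f + l * g c" by (simp add: p_def gl)
      have "(1-l) * g f \<le> 0" using True l l0 by (intro mult_nonneg_nonpos) auto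
      moreover have "l * g c < 0" using gc l by (simp add: mult_pos_neg)
      ultimately have gpn: "g p < 0" unfolding gp by linarith
      have "l * (\<beta> \<bullet> f) < l * (\<beta> \<bullet> c)" using lc l by simp
      then have lq: "\<beta> \<bullet> f < \<beta> \<bullet> p" unfolding p_def ll by (simp add: algebra_simps)
      define \<theta> where "\<theta> = g p / (g p + g f)"
      have th: "0 \<le> \<theta>" "\<theta> \<le> 1" using True gpn by (auto simp: \<theta>_def divide_le_eq_1 divide_nonpos_neg)
      have C: "(1 - \<theta>) *\<^sub>R p + \<theta> *\<^sub>R f = (1 - (1-\<theta>)*l) *\<^sub>R f + ((1-\<theta>)*l) *\<^sub>R c"
        using comb2[of \<theta> l f c 0] by (simp add: p_def)
      have kl: "0 \<le> (1-\<theta>)*l" "(1-\<theta>)*l \<le> 1" using th l l0 by (auto intro: mult_le_one)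
      have bC0: "ball ((1 - \<theta>) *\<^sub>R p + \<theta> *\<^sub>R f) ((1-\<theta>)*l*\<rho>) \<subseteq> P"
        using ball_shrink[OF f bc kl] unfolding C .
      have bC: "ball ((1 - g p/(g p + g f)) *\<^sub>R p + (g p/(g p + g f)) *\<^sub>R f) ((1-\<theta>)*l*\<rho>) \<subseteq> P"
        using bC0 unfolding \<theta>_def .
      have "g p - g f = l * (g c - g f)" by (simp add: gp algebra_simps)
      then have "(g p - g f)^2 * norm e = l * (l * K)" unfolding K_def by (simp add: power_mult_distrib power2_eq_square)
      also have "\<dots> < l * (2 * (- g f) * \<rho>)" using l0 l by (intro mult_strict_left_mono) auto
      also have "\<dots> = ((1-\<theta>)*l*\<rho>) * (-2 * (g p + g f))"
      proof -
        have "\<theta> * (g p + g f) = g p" using True gpn by (simp add: \<theta>_def)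
        then have "(1-\<theta>) * (g p + g f) = g f" by (simp add: algebra_simps)
        moreover have "((1-\<theta>)*l*\<rho>) * (-2 * (g p + g f)) = -2*l*\<rho>*((1-\<theta>) * (g p + g f))" by algebra
        ultimately show ?thesis by simp
      qed
      finally have sm: "(g p - g f)^2 * norm e < ((1-\<theta>)*l*\<rho>) * (-2 * (g p + g f))" .
      show "reaches A a B P ((1-l) *\<^sub>R f + l *\<^sub>R c) {f}"
        using gm[OF pP f lq _ _ _ bC sm] True gpn by (simp add: p_def)
    qed
  next
    case False
    then have g00: "g f = 0" using g0 by simp
    obtain z where z: "z \<in> P" "\<beta> \<bullet> z = \<beta> \<bullet> f" "g z < 0" using ns False by auto
    obtain l0 where l0: "l0 > 0" "l0 \<le> 1" "\<forall>l. 0 < l \<and> l \<le> l0 \<longrightarrow> l * (- g c) < 2 * (- g z)"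
      using small_param[of "- g c" "2 * (- g z)"] gc z by auto
    show ?thesis
    proof (intro exI conjI allI impI)
      show "l0 > 0" by fact
      fix l assume l: "0 < l \<and> l \<le> l0"
      define p where "p = (1-l) *\<^sub>R f + l *\<^sub>R c"
      have pP: "p \<in> P" using pl l l0 by (simp add: p_def)
      have gp: "g p = l * g c" by (simp add: p_def gl g00)
      have gpn: "g p < 0" unfolding gp using gc l by (simp add: mult_pos_neg)
      have "l * (\<beta> \<bullet> f) < l * (\<beta> \<bullet> c)" using lc l by simp
      then have lq: "\<beta> \<bullet> f < \<beta> \<bullet> p" unfolding p_def ll by (simp add: algebra_simps)
      define s where "s = l * g c / (2 * g z)"
      have lgc: "l * g c \<le> 0" using gc l by (simp add: mult_pos_neg less_imp_le)
      have "2 * g z \<le> l * g c" using l0 l by auto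
      then have s: "0 \<le> s" "s \<le> 1" using lgc z
        by (auto simp: s_def neg_divide_le_eq intro!: divide_nonpos_neg)
      define r where "r = (1-s) *\<^sub>R f + s *\<^sub>R z"
      have rP: "r \<in> P" using cvx f z s by (simp add: r_def convexD)
      show "reaches A a B P ((1-l) *\<^sub>R f + l *\<^sub>R c) {f}"
        unfolding p_def[symmetric]
      proof (rule bez2[OF pP rP f lq])
        show "g p + g f < 0" using g00 gpn by simp
        show "\<beta> \<bullet> r = \<beta> \<bullet> p + g p * (\<beta> \<bullet> f - \<beta> \<bullet> p) / (g p + g f)"
        proof -
          have "\<beta> \<bullet> r = \<beta> \<bullet> f" using z by (simp add: r_def inner_add_right algebra_simps)
          moreover have "g p * (\<beta> \<bullet> f - \<beta> \<bullet> p) / (g p + g f) = \<beta> \<bullet> f - \<beta> \<bullet> p"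
            using gpn g00 by simp
          ultimately show ?thesis by simp
        qed
        show "g r = (g p + g f) / 2"
          unfolding r_def g_comb g00 gp s_def using z by (simp add: field_simps)
      qed
    qed
  qed
qed

end

context setting begin

lemma main_reach:
  assumes x0: "x0 \<in> P" and f: "f \<in> P" and bc: "ball c \<rho> \<subseteq> P" and rho: "\<rho> > 0"
    and lf: "\<beta> \<bullet> f < \<beta> \<bullet> c" and lx: "\<beta> \<bullet> c < \<beta> \<bullet> x0"
    and nsx: "g x0 < 0 \<or> (\<exists>z\<in>P. \<beta> \<bullet> z = \<beta> \<bullet> x0 \<and> g z < 0)"
    and nsf: "g f < 0 \<or> (\<exists>z\<in>P. \<beta> \<bullet> z = \<beta> \<bullet> f \<and> g z < 0)"
  shows "reaches A a B P x0 {f}"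
proof -
  obtain l1 where l1: "l1 > 0" "\<forall>l. 0 < l \<and> l \<le> l1 \<longrightarrow> reaches A a B P x0 {(1-l) *\<^sub>R x0 + l *\<^sub>R c}"
    using first_move[OF x0 bc rho lx nsx] by blast
  obtain l2 where l2: "l2 > 0" "\<forall>l. 0 < l \<and> l \<le> l2 \<longrightarrow> reaches A a B P ((1-l) *\<^sub>R f + l *\<^sub>R c) {f}"
    using last_move[OF f bc rho lf nsf] by blast
  define l where "l = min (min l1 l2) (1/2)"
  have l: "0 < l" "l \<le> l1" "l \<le> l2" "l \<le> 1/2" using l1 l2 by (auto simp: l_def)
  define p1 where "p1 = (1-l) *\<^sub>R x0 + l *\<^sub>R c"
  define p2 where "p2 = (1-l) *\<^sub>R f + l *\<^sub>R c"
  have r1: "reaches A a B P x0 {p1}" using l1 l unfolding p1_def by auto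
  have r3: "reaches A a B P p2 {f}" using l2 l unfolding p2_def by auto
  have b1: "ball p1 (l*\<rho>) \<subseteq> P" unfolding p1_def by (rule ball_shrink[OF x0 bc]) (use l in auto)
  have b2: "ball p2 (l*\<rho>) \<subseteq> P" unfolding p2_def by (rule ball_shrink[OF f bc]) (use l in auto)
  have "(1-l) * (\<beta> \<bullet> f) < (1-l) * (\<beta> \<bullet> x0)" using l lf lx by simp
  then have lt: "\<beta> \<bullet> p2 < \<beta> \<bullet> p1" unfolding p1_def p2_def by (simp add: inner_add_right)
  have r2: "reaches A a B P p1 {p2}"
    by (rule ic[OF lt, of "l*\<rho>"]) (use l rho ball_seg[OF b1 b2] in auto)
  show ?thesis using reaches_trans[OF r1 reaches_trans[OF r2 r3]] .
qed

lemma level_point: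
  assumes bc: "ball c \<rho> \<subseteq> P" and rho: "\<rho> > 0" and y: "y \<in> P"
    and L: "(\<beta> \<bullet> c < L \<and> L < \<beta> \<bullet> y) \<or> (\<beta> \<bullet> y < L \<and> L < \<beta> \<bullet> c)"
  shows "\<exists>z\<in>P. \<beta> \<bullet> z = L \<and> g z < 0"
proof -
  define s where "s = (L - \<beta> \<bullet> c) / (\<beta> \<bullet> y - \<beta> \<bullet> c)"
  have s: "0 < s" "s < 1" using L by (auto simp: s_def field_simps divide_less_eq)
  define z where "z = (1 - (1-s)) *\<^sub>R y + (1-s) *\<^sub>R c"
  have bz: "ball z ((1-s)*\<rho>) \<subseteq> P" unfolding z_def by (rule ball_shrink[OF y bc]) (use s in auto)
  have "g z < 0" by (rule ballneg[OF bz]) (use s rho in auto)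
  moreover have "z \<in> P" using bz s rho by auto
  moreover have "\<beta> \<bullet> z = L"
  proof -
    have "\<beta> \<bullet> z = \<beta> \<bullet> c + s * (\<beta> \<bullet> y - \<beta> \<bullet> c)" by (simp add: z_def inner_add_right algebra_simps)
    also have "\<dots> = L"
    proof -
      have "\<beta> \<bullet> y - \<beta> \<bullet> c \<noteq> 0" using L by auto
      then show ?thesis by (simp add: s_def)
    qed
    finally show ?thesis .
  qed
  ultimately show ?thesis by blast
qed

lemma aux: "\<bar>d\<bar> < (X - F)/2 \<Longrightarrow> F < (X + F)/2 + d \<and> (X + F)/2 + (d::real) < X"
  by (cases "d \<ge> 0") (auto simp: field_simps)

lemma exists_c:
  assumes b1: "ball c1 \<rho>1 \<subseteq> P" and r1: "\<rho>1 > 0" and x0: "x0 \<in> P" and f: "f \<in> P"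
    and lt: "\<beta> \<bullet> f < \<beta> \<bullet> x0"
  shows "\<exists>c \<rho>. \<rho> > 0 \<and> ball c \<rho> \<subseteq> P \<and> \<beta> \<bullet> f < \<beta> \<bullet> c \<and> \<beta> \<bullet> c < \<beta> \<bullet> x0"
proof -
  define y where "y = (1 - 1/2) *\<^sub>R x0 + (1/2::real) *\<^sub>R f"
  have yP: "y \<in> P" using cvx x0 f by (simp add: y_def convexD)
  have ly: "\<beta> \<bullet> y = (\<beta> \<bullet> x0 + \<beta> \<bullet> f) / 2" by (simp add: y_def inner_add_right)
  obtain l0 where l0: "l0 > 0" "l0 \<le> 1" "\<forall>l. 0 < l \<and> l \<le> l0 \<longrightarrow> l * \<bar>\<beta> \<bullet> c1 - \<beta> \<bullet> y\<bar> < (\<beta> \<bullet> x0 - \<beta> \<bullet> f)/2"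
    using small_param[of "\<bar>\<beta> \<bullet> c1 - \<beta> \<bullet> y\<bar>" "(\<beta> \<bullet> x0 - \<beta> \<bullet> f)/2"] lt by auto
  define c where "c = (1 - l0) *\<^sub>R y + l0 *\<^sub>R c1"
  have bc: "ball c (l0*\<rho>1) \<subseteq> P" unfolding c_def by (rule ball_shrink[OF yP b1]) (use l0 in auto)
  have lc: "\<beta> \<bullet> c = \<beta> \<bullet> y + l0 * (\<beta> \<bullet> c1 - \<beta> \<bullet> y)" by (simp add: c_def inner_add_right algebra_simps)
  have "\<bar>l0 * (\<beta> \<bullet> c1 - \<beta> \<bullet> y)\<bar> < (\<beta> \<bullet> x0 - \<beta> \<bullet> f)/2" using l0 by (simp add: abs_mult)
  moreover have "\<forall>d. \<bar>d\<bar> < (\<beta> \<bullet> x0 - \<beta> \<bullet> f)/2 \<longrightarrow> \<beta> \<bullet> f < (\<beta> \<bullet> x0 + \<beta> \<bullet> f) / 2 + d \<and> (\<beta> \<bullet> x0 + \<beta> \<bullet> f) / 2 + d < \<beta> \<bullet> x0"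
  proof (intro allI impI)
    fix d :: real assume "\<bar>d\<bar> < (\<beta> \<bullet> x0 - \<beta> \<bullet> f)/2"
    then show "\<beta> \<bullet> f < (\<beta> \<bullet> x0 + \<beta> \<bullet> f) / 2 + d \<and> (\<beta> \<bullet> x0 + \<beta> \<bullet> f) / 2 + d < \<beta> \<bullet> x0"
      by (rule aux)
  qed
  ultimately have "\<beta> \<bullet> f < \<beta> \<bullet> c \<and> \<beta> \<bullet> c < \<beta> \<bullet> x0" unfolding lc ly by blast
  then show ?thesis using bc l0 r1 by (intro exI[of _ c] exI[of _ "l0*\<rho>1"]) auto
qed

end

lemma exists_e:
  fixes A :: "real^'n^'n" and B :: "real^'m^'n"
  assumes ctr: "controllable A B" and bn: "\<And>u. \<beta> \<bullet> (B *v u) = 0" and b0: "\<beta> \<noteq> 0"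
  shows "\<exists>e. \<beta> \<bullet> e = 0 \<and> \<beta> \<bullet> (A *v e) = 1"
proof (rule ccontr)
  assume ne: "\<not> ?thesis"
  define V where "V = {y::real^'n. \<beta> \<bullet> y = 0}"
  have inv: "\<beta> \<bullet> (A *v y) = 0" if "\<beta> \<bullet> y = 0" for y
  proof (rule ccontr)
    assume c: "\<beta> \<bullet> (A *v y) \<noteq> 0"
    define e where "e = (1 / (\<beta> \<bullet> (A *v y))) *\<^sub>R y"
    have "\<beta> \<bullet> e = 0 \<and> \<beta> \<bullet> (A *v e) = 1" using that c by (simp add: e_def matrix_vector_mult_scaleR)
    then show False using ne by blast
  qed
  have pw: "((\<lambda>y. A *v y) ^^ k) (B *v v) \<in> V" for k v
    by (induction k) (auto simp: V_def bn inv)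
  have "span (\<Union>k < CARD('n). range (\<lambda>v. ((\<lambda>y. A *v y) ^^ k) (B *v v))) \<subseteq> V"
    by (rule span_minimal) (use pw in \<open>auto simp: V_def subspace_hyperplane\<close>)
  then have "\<beta> \<in> V" using ctr unfolding controllable_def by auto
  then show False using b0 by (simp add: V_def)
qed

lemma B_surj:
  fixes B :: "real^'m^'n"
  assumes rk: "rank B = CARD('n) - 1" and bn: "\<And>u. \<beta> \<bullet> (B *v u) = 0" and b0: "\<beta> \<noteq> 0"
  shows "\<beta> \<bullet> y = 0 \<Longrightarrow> \<exists>u. B *v u = y"
proof -
  assume y: "\<beta> \<bullet> y = 0"
  have sub: "range (\<lambda>x. B *v x) \<subseteq> {x. \<beta> \<bullet> x = 0}" using bn by auto
  have "subspace (range (\<lambda>x. B *v x))"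
    unfolding subspace_def
  proof (intro conjI ballI allI)
    show "0 \<in> range (\<lambda>x. B *v x)" by (rule range_eqI[of _ _ 0]) simp
    fix x y assume "x \<in> range (\<lambda>x. B *v x)" "y \<in> range (\<lambda>x. B *v x)"
    then obtain u v where "x = B *v u" "y = B *v v" by auto
    then show "x + y \<in> range (\<lambda>x. B *v x)" by (auto intro: range_eqI[of _ _ "u + v"] simp: matrix_vector_right_distrib)
  next
    fix c :: real and x assume "x \<in> range (\<lambda>x. B *v x)"
    then obtain u where "x = B *v u" by auto
    then show "c *\<^sub>R x \<in> range (\<lambda>x. B *v x)" by (auto intro: range_eqI[of _ _ "c *\<^sub>R u"] simp: matrix_vector_mult_scaleR)
  qed
  moreover have "dim {x. \<beta> \<bullet> x = 0} \<le> dim (range (\<lambda>x. B *v x))"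
    using dim_hyperplane[OF b0] rk by (simp add: rank_dim_range)
  ultimately have "range (\<lambda>x. B *v x) = {x. \<beta> \<bullet> x = 0}"
    using subspace_dim_equal[OF _ subspace_hyperplane sub] by blast
  then have "y \<in> range (\<lambda>x. B *v x)" using y by simp
  then show ?thesis by (metis rangeE)
qed

context setting begin

lemma affine_O: "affine {x. g x = 0}"
  unfolding affine_def
proof (intro allI impI ballI, clarsimp)
  fix x y :: "real^'n" and u v :: real
  assume "g x = 0" "g y = 0" "u + v = 1"
  then show "g (u *\<^sub>R x + v *\<^sub>R y) = 0" using g_comb[of v x y] by (simp add: eq_diff_eq[symmetric])
qed

lemma not_flat:
  assumes F: "F \<noteq> {}" and ad: "aff_dim F = int CARD('n) - 1" and b0: "\<beta> \<noteq> 0"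
    and lev: "F \<subseteq> {x. \<beta> \<bullet> x = m}" and inO: "F \<subseteq> {x. g x = 0}"
  shows False
proof -
  define H where "H = {x::real^'n. \<beta> \<bullet> x = m}"
  have "affine hull F \<subseteq> H" unfolding H_def by (rule hull_minimal[OF lev]) (rule affine_hyperplane)
  moreover have "aff_dim (affine hull F) = aff_dim H" using ad b0 by (simp add: H_def)
  ultimately have eq: "affine hull F = H"
    by (intro affine_dim_equal) (use F affine_affine_hull affine_hyperplane H_def in auto)
  have "H \<subseteq> {x. g x = 0}" unfolding eq[symmetric] by (rule hull_minimal[OF inO]) (rule affine_O)
  obtain v where v: "v \<in> F" using F by auto
  then have "v \<in> H" "v + 1 *\<^sub>R e \<in> H" using lev l_e[of v 1] by (auto simp: H_def simp del: scaleR_one)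
  then have "g v = 0" "g (v + 1 *\<^sub>R e) = 0" using \<open>H \<subseteq> _\<close> by auto
  then show False using g_e[of v 1] by simp
qed

end

context setting begin

lemma horiz:
  assumes p: "p \<in> P" and q: "q \<in> P" and gp: "g p = 0" and gq: "g q = 0" and l: "\<beta> \<bullet> p = \<beta> \<bullet> q"
  shows "reaches A a B P p {q}"
proof (rule bezier[OF p _ q, of "(1 - 1/2) *\<^sub>R p + (1/2::real) *\<^sub>R q" 1])
  show "(1 - 1/2) *\<^sub>R p + (1/2::real) *\<^sub>R q \<in> P" using cvx p q by (simp add: convexD)
  show "\<beta> \<bullet> ((1 - 1/2) *\<^sub>R p + (1/2::real) *\<^sub>R q - p) = 1/2 * g p"
    using l gp by (simp add: inner_add_right inner_diff_right)
  show "\<beta> \<bullet> (q - ((1 - 1/2) *\<^sub>R p + (1/2::real) *\<^sub>R q)) = 1/2 * g q"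
    using l gq by (simp add: inner_add_right inner_diff_right)
  show "g ((1 - 1/2) *\<^sub>R p + (1/2::real) *\<^sub>R q) = (g p + g q) / 2"
    unfolding g_comb using gp gq by simp
qed simp

lemma reach_down:
  assumes x0: "x0 \<in> P" and f: "f \<in> P" and lt: "\<beta> \<bullet> f < \<beta> \<bullet> x0"
    and b1: "ball c1 \<rho>1 \<subseteq> P" and r1: "\<rho>1 > 0"
    and nsx: "g x0 < 0 \<or> (\<exists>z\<in>P. \<beta> \<bullet> z = \<beta> \<bullet> x0 \<and> g z < 0) \<or> (\<exists>y\<in>P. \<beta> \<bullet> y > \<beta> \<bullet> x0)"
    and nsf: "g f < 0 \<or> (\<exists>z\<in>P. \<beta> \<bullet> z = \<beta> \<bullet> f \<and> g z < 0) \<or> (\<exists>y\<in>P. \<beta> \<bullet> y < \<beta> \<bullet> f)"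
  shows "reaches A a B P x0 {f}"
proof -
  obtain c \<rho> where c: "\<rho> > 0" "ball c \<rho> \<subseteq> P" "\<beta> \<bullet> f < \<beta> \<bullet> c" "\<beta> \<bullet> c < \<beta> \<bullet> x0"
    using exists_c[OF b1 r1 x0 f lt] by blast
  have nsx': "g x0 < 0 \<or> (\<exists>z\<in>P. \<beta> \<bullet> z = \<beta> \<bullet> x0 \<and> g z < 0)"
    using nsx level_point[OF c(2) c(1), of _ "\<beta> \<bullet> x0"] c(4) by auto
  have nsf': "g f < 0 \<or> (\<exists>z\<in>P. \<beta> \<bullet> z = \<beta> \<bullet> f \<and> g z < 0)"
    using nsf level_point[OF c(2) c(1), of _ "\<beta> \<bullet> f"] c(3) by auto
  show ?thesis by (rule main_reach[OF x0 f c(2) c(1) c(3) c(4) nsx' nsf'])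
qed

end

theorem corollary1:
  fixes A :: "real^'n^'n" and a :: "real^'n" and B :: "real^'m^'n"
    and P F :: "(real^'n) set" and \<beta> vm vp :: "real^'n"
  defines "Bim \<equiv> range (\<lambda>u. B *v u)"
      and "Obs \<equiv> {x. A *v x + a \<in> range (\<lambda>u. B *v u)}"
  assumes P_poly: "polytope P" and P_dim: "aff_dim P = int CARD('n)"
      and A1: "rank B = CARD('n) - 1"
      and A2: "controllable A B"
      and A3: "interior P \<inter> Obs = {}"
      and A4: "polytope F" "aff_dim F = int CARD('n) - 1" "F \<subseteq> frontier P"
      and beta_unit: "norm \<beta> = 1"
      and beta_normal: "\<forall>y \<in> Bim. \<beta> \<bullet> y = 0"
      and beta_sign: "\<forall>x \<in> P. \<beta> \<bullet> (A *v x + a) \<le> 0"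
      and vm: "vm \<in> F" "\<forall>x \<in> F. \<beta> \<bullet> vm \<le> \<beta> \<bullet> x"
      and vp: "vp \<in> F" "\<forall>x \<in> F. \<beta> \<bullet> x \<le> \<beta> \<bullet> vp"
  shows "let Hm = {x \<in> P. \<beta> \<bullet> x \<le> \<beta> \<bullet> vm};
             Pp = {x \<in> P. \<forall>y \<in> P. \<beta> \<bullet> y \<le> \<beta> \<bullet> x};
             Bvm = {x. \<beta> \<bullet> x = \<beta> \<bullet> vm};
             Bm = (if Bvm \<inter> Obs \<inter> F \<noteq> {} then Bvm \<inter> Obs else {});
             Am = Hm - (F \<union> Bm);
             Ap = (if Pp \<subseteq> Obs \<inter> {x \<in> P. \<beta> \<bullet> x > \<beta> \<bullet> vp} then Pp else {});
             AA = Am \<union> Ap;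
             R = Reach A a B P F
         in R = P - AA
            \<and> (\<forall>x \<in> R. reaches A a B R x F)
            \<and> (\<forall>x \<in> AA. \<not> reaches A a B P x F)"
proof -
  have b0: "\<beta> \<noteq> 0" using beta_unit by auto
  have bn: "\<And>u. \<beta> \<bullet> (B *v u) = 0" using beta_normal unfolding Bim_def by auto
  have Bs: "\<And>y. \<beta> \<bullet> y = 0 \<Longrightarrow> \<exists>u. B *v u = y" using B_surj[OF A1 bn b0] by blast
  obtain e where e: "\<beta> \<bullet> e = 0" "\<beta> \<bullet> (A *v e) = 1" using exists_e[OF A2 bn b0] by blast
  have cvx: "convex P" using P_poly by (rule polytope_imp_convex)
  interpret S0: sysP A a B \<beta> by unfold_locales (rule bn)
  have gdef: "S0.g x = \<beta> \<bullet> (A *v x + a)" for x by (simp add: S0.g_def)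
  interpret S: setting A a B \<beta> P e
    by unfold_locales (use Bs cvx e beta_sign gdef in auto)
  have gsign: "\<forall>x\<in>P. S0.g x \<le> 0" using beta_sign gdef by simp
  have Obs_eq: "x \<in> Obs \<longleftrightarrow> S0.g x = 0" for x
  proof
    assume "x \<in> Obs"
    then obtain u where "A *v x + a = B *v u" unfolding Obs_def by auto
    then show "S0.g x = 0" using bn gdef by simp
  next
    assume "S0.g x = 0"
    then have "\<beta> \<bullet> (A *v x + a) = 0" by (simp add: gdef)
    then obtain u where u: "B *v u = A *v x + a" using Bs by blast
    have "A *v x + a \<in> range (\<lambda>u. B *v u)" by (rule range_eqI[of _ _ u]) (simp add: u)
    then show "x \<in> Obs" unfolding Obs_def by simp
  qed
  have "frontier P \<subseteq> P" by (rule frontier_subset_closed[OF polytope_imp_closed[OF P_poly]])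
  then have FP: "F \<subseteq> P" using A4(3) by blast
  have cvxF: "convex F" using A4(1) by (rule polytope_imp_convex)
  obtain c1 \<rho>1 where b1: "ball c1 \<rho>1 \<subseteq> P" "\<rho>1 > 0"
  proof -
    have "P \<noteq> {}"
    proof
      assume "P = {}"
      then show False using P_dim by simp
    qed
    then have "interior P \<noteq> {}"
      using interior_rel_interior[of P] rel_interior_eq_empty[OF cvx] P_dim by simp
    then obtain c1 where "c1 \<in> interior P" by auto
    then obtain \<rho> where "\<rho> > 0" "ball c1 \<rho> \<subseteq> P" unfolding mem_interior by blast
    then show ?thesis by (rule that[rotated])
  qed
  define Hm where "Hm = {x \<in> P. \<beta> \<bullet> x \<le> \<beta> \<bullet> vm}"
  define Pp where "Pp = {x \<in> P. \<forall>y \<in> P. \<beta> \<bullet> y \<le> \<beta> \<bullet> x}"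
  define Bvm where "Bvm = {x. \<beta> \<bullet> x = \<beta> \<bullet> vm}"
  define Bm where "Bm = (if Bvm \<inter> Obs \<inter> F \<noteq> {} then Bvm \<inter> Obs else {})"
  define Am where "Am = Hm - (F \<union> Bm)"
  define Ap where "Ap = (if Pp \<subseteq> Obs \<inter> {x \<in> P. \<beta> \<bullet> x > \<beta> \<bullet> vp} then Pp else {})"
  define AA where "AA = Am \<union> Ap"
  define R where "R = Reach A a B P F"
  have traj: "X t1 \<notin> AA"
    if pc: "piecewise_continuous_on T u" and sol: "is_solution A a B u x0 T X"
      and inP: "\<forall>t\<in>{0..T}. X t \<in> P" and XT: "X T \<in> F" and t1: "t1 \<in> {0..T}" for u T X x0 t1
  proof
    assume "X t1 \<in> AA"
    then consider "X t1 \<in> Am" | "X t1 \<in> Ap" unfolding AA_def by blast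
    then show False
    proof cases
      case 1
      then have x1: "X t1 \<in> P" "\<beta> \<bullet> X t1 \<le> \<beta> \<bullet> vm" "X t1 \<notin> F" "X t1 \<notin> Bm"
        unfolding Am_def Hm_def by auto
      have lt: "t1 < T" using t1 x1(3) XT by (cases "t1 = T") auto
      have mT: "\<beta> \<bullet> vm \<le> \<beta> \<bullet> X T" using vm XT by auto
      have le: "\<beta> \<bullet> X t1 \<le> \<beta> \<bullet> X T" using x1 mT by linarith
      have cT: "S0.g (X T) = 0 \<and> \<beta> \<bullet> X T = \<beta> \<bullet> X t1"
        by (rule S0.ell_const[OF pc sol inP gsign t1 lt le]) (use t1 in auto)
      have c1: "S0.g (X t1) = 0"
        using S0.ell_const[OF pc sol inP gsign t1 lt le, of t1] t1 by auto
      have eqm: "\<beta> \<bullet> X t1 = \<beta> \<bullet> vm" using cT x1 mT by linarith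
      have "X T \<in> Bvm \<inter> Obs \<inter> F" using cT eqm XT Obs_eq by (auto simp: Bvm_def)
      then have "Bm = Bvm \<inter> Obs" unfolding Bm_def by auto
      moreover have "X t1 \<in> Bvm \<inter> Obs" using eqm c1 Obs_eq by (auto simp: Bvm_def)
      ultimately show False using x1 by auto
    next
      case 2
      then have cond: "Pp \<subseteq> Obs \<inter> {x \<in> P. \<beta> \<bullet> x > \<beta> \<bullet> vp}" and xp: "X t1 \<in> Pp"
        unfolding Ap_def by (auto split: if_splits)
      have mx: "\<forall>y\<in>P. \<beta> \<bullet> y \<le> \<beta> \<bullet> X t1" using xp by (auto simp: Pp_def)
      have top: "\<forall>y\<in>P. \<beta> \<bullet> y = \<beta> \<bullet> X t1 \<longrightarrow> S0.g y = 0"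
      proof (intro ballI impI)
        fix y assume y: "y \<in> P" "\<beta> \<bullet> y = \<beta> \<bullet> X t1"
        then have "y \<in> Pp" using mx by (auto simp: Pp_def)
        then show "S0.g y = 0" using cond Obs_eq by auto
      qed
      obtain C where bd: "\<forall>y\<in>P. - S0.g y \<le> C * (\<beta> \<bullet> X t1 - \<beta> \<bullet> y)"
        using S0.vertex_bound[OF P_poly mx top gsign] by blast
      have "\<beta> \<bullet> X T = \<beta> \<bullet> X t1" by (rule S0.gronwall[OF pc sol inP t1 mx bd]) (use t1 in auto)
      moreover have "\<beta> \<bullet> X t1 > \<beta> \<bullet> vp" using cond xp by auto
      moreover have "\<beta> \<bullet> X T \<le> \<beta> \<bullet> vp" using vp XT by auto
      ultimately show False by linarith
    qed
  qed
  have unpack: "\<exists>u T X. T \<ge> 0 \<and> piecewise_continuous_on T u \<and> is_solution A a B u x T X \<and> X T \<in> F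
      \<and> (\<forall>t\<in>{0..T}. X t \<in> P) \<and> X 0 = x" if rr: "reaches A a B P x F" for x
  proof -
    obtain u T X where *: "T \<ge> 0" "piecewise_continuous_on T u" "is_solution A a B u x T X" "X T \<in> F"
      "\<forall>t\<in>{0..T}. X t \<in> P" using rr unfolding reaches_def by blast
    then have "X 0 = x" unfolding is_solution_def by auto
    then show ?thesis using * by blast
  qed
  have notAA: "x \<notin> AA" if rr: "reaches A a B P x F" for x
  proof -
    obtain u T X where *: "T \<ge> 0" "piecewise_continuous_on T u" "is_solution A a B u x T X" "X T \<in> F"
      "\<forall>t\<in>{0..T}. X t \<in> P" "X 0 = x" using unpack[OF rr] by blast
    show ?thesis using traj[OF *(2,3,5,4), of 0] *(1,6) by auto
  qed
  have constr: "reaches A a B P x0 F" if x0: "x0 \<in> P" "x0 \<notin> AA" for x0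
  proof (cases "x0 \<in> F")
    case True then show ?thesis using reaches_refl[of x0 P F] x0 by blast
  next
    case nF: False
    show ?thesis
    proof (cases "\<beta> \<bullet> x0 \<le> \<beta> \<bullet> vm")
      case True
      then have "x0 \<in> Hm" using x0 by (simp add: Hm_def)
      then have "x0 \<in> Bm" using x0 nF by (auto simp: AA_def Am_def)
      then have ne: "Bvm \<inter> Obs \<inter> F \<noteq> {}" and xb: "x0 \<in> Bvm \<inter> Obs"
        by (auto simp: Bm_def split: if_splits)
      obtain f where f: "f \<in> Bvm \<inter> Obs \<inter> F" using ne by blast
      have "reaches A a B P x0 {f}"
        by (rule S.horiz) (use x0 f FP xb Obs_eq in \<open>auto simp: Bvm_def\<close>)
      then show ?thesis using reaches_trans reaches_refl[of f P F] f FP by blast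
    next
      case False
      then have gt: "\<beta> \<bullet> vm < \<beta> \<bullet> x0" by simp
      show ?thesis
      proof (cases "x0 \<in> Pp \<and> Pp \<subseteq> Obs")
        case True
        then have "x0 \<notin> Ap" using x0 by (auto simp: AA_def)
        then have "\<not> (Pp \<subseteq> Obs \<inter> {x \<in> P. \<beta> \<bullet> x > \<beta> \<bullet> vp})" using True by (auto simp: Ap_def)
        then obtain y where y0: "y \<in> Pp" "y \<notin> Obs \<inter> {x \<in> P. \<beta> \<bullet> x > \<beta> \<bullet> vp}" by blast
        have "y \<in> Obs" "y \<in> P" using y0 True by (auto simp: Pp_def)
        then have y: "y \<in> Pp" "\<beta> \<bullet> y \<le> \<beta> \<bullet> vp" using y0 by auto
        have vpP: "vp \<in> P" using vp FP by auto
        have "\<beta> \<bullet> y = \<beta> \<bullet> x0" using y True x0 by (auto simp: Pp_def intro: order.antisym)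
        then have "vp \<in> Pp" using y vpP True by (auto simp: Pp_def)
        then have vpO: "vp \<in> Obs" and lvp: "\<beta> \<bullet> vp = \<beta> \<bullet> x0"
          using True x0 vpP by (auto simp: Pp_def intro: order.antisym)
        have "reaches A a B P x0 {vp}"
          by (rule S.horiz) (use x0 vpP vpO True lvp Obs_eq in auto)
        then show ?thesis using reaches_trans reaches_refl[of vp P F] vp vpP by blast
      next
        case False
        have g0: "S0.g x0 \<le> 0" using gsign x0 by auto
        have nsx: "S0.g x0 < 0 \<or> (\<exists>z\<in>P. \<beta> \<bullet> z = \<beta> \<bullet> x0 \<and> S0.g z < 0) \<or> (\<exists>y\<in>P. \<beta> \<bullet> y > \<beta> \<bullet> x0)"
        proof (cases "x0 \<in> Pp")
          case True
          then obtain z where z: "z \<in> Pp" "z \<notin> Obs" using False by auto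
          have "\<beta> \<bullet> z = \<beta> \<bullet> x0" using z True by (auto simp: Pp_def intro: order.antisym)
          moreover have "S0.g z < 0" using z Obs_eq gsign by (force simp: Pp_def)
          ultimately show ?thesis using z by (auto simp: Pp_def)
        next
          case False
          then show ?thesis using x0 by (auto simp: Pp_def not_le)
        qed
        obtain f where f: "f \<in> F" "\<beta> \<bullet> f < \<beta> \<bullet> x0"
          and nsf: "S0.g f < 0 \<or> (\<exists>z\<in>P. \<beta> \<bullet> z = \<beta> \<bullet> f \<and> S0.g z < 0) \<or> (\<exists>y\<in>P. \<beta> \<bullet> y < \<beta> \<bullet> f)"
        proof (cases "S0.g vm < 0 \<or> (\<exists>y\<in>P. \<beta> \<bullet> y < \<beta> \<bullet> vm)")
          case True
          then show ?thesis using that[of vm] vm gt by blast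
        next
          case nA: False
          show ?thesis
          proof (cases "\<beta> \<bullet> vm < \<beta> \<bullet> vp")
            case True
            define s where "s = min (1/2) ((\<beta> \<bullet> x0 - \<beta> \<bullet> vm) / (2 * (\<beta> \<bullet> vp - \<beta> \<bullet> vm)))"
            have s: "0 < s" "s \<le> 1" using True gt by (auto simp: s_def)
            define f where "f = (1 - s) *\<^sub>R vm + s *\<^sub>R vp"
            have fF: "f \<in> F" using cvxF vm vp s by (simp add: f_def convexD)
            have lf: "\<beta> \<bullet> f = \<beta> \<bullet> vm + s * (\<beta> \<bullet> vp - \<beta> \<bullet> vm)"
              by (simp add: f_def inner_add_right algebra_simps)
            have "2 * (s * (\<beta> \<bullet> vp - \<beta> \<bullet> vm)) \<le> \<beta> \<bullet> x0 - \<beta> \<bullet> vm"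
            proof -
              have "s \<le> (\<beta> \<bullet> x0 - \<beta> \<bullet> vm) / (2 * (\<beta> \<bullet> vp - \<beta> \<bullet> vm))" by (simp add: s_def)
              then show ?thesis using True by (simp add: le_divide_eq algebra_simps)
            qed
            then have l1: "\<beta> \<bullet> f < \<beta> \<bullet> x0" using lf gt by linarith
            have "0 < s * (\<beta> \<bullet> vp - \<beta> \<bullet> vm)" using s True by simp
            then have l2: "\<beta> \<bullet> vm < \<beta> \<bullet> f" using lf by linarith
            show ?thesis using that[OF fF l1] l2 vm FP by blast
          next
            case False
            then have lev: "F \<subseteq> {x. \<beta> \<bullet> x = \<beta> \<bullet> vm}" using vm vp by (force intro: order.antisym)
            have "\<not> F \<subseteq> {x. S0.g x = 0}"
              using S.not_flat[OF _ A4(2) b0 lev] vm by blast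
            then obtain f where "f \<in> F" "S0.g f \<noteq> 0" by auto
            moreover then have "S0.g f < 0" using gsign FP by force
            moreover have "\<beta> \<bullet> f < \<beta> \<bullet> x0" using lev \<open>f \<in> F\<close> gt by auto
            ultimately show ?thesis using that by blast
          qed
        qed
        have fP: "f \<in> P" using f FP by auto
        have "reaches A a B P x0 {f}" by (rule S.reach_down[OF x0(1) fP f(2) b1 nsx nsf])
        then show ?thesis using reaches_trans reaches_refl[of f P F] f fP by blast
      qed
    qed
  qed
  have RPA: "R = P - AA"
  proof
    show "R \<subseteq> P - AA" using notAA by (auto simp: R_def Reach_def)
    show "P - AA \<subseteq> R" using constr by (auto simp: R_def Reach_def)
  qed
  have part2: "\<forall>x \<in> R. reaches A a B R x F"
  proof
    fix x assume "x \<in> R"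
    then have r: "reaches A a B P x F" by (simp add: R_def Reach_def)
    obtain u T X where *: "T \<ge> 0" "piecewise_continuous_on T u" "is_solution A a B u x T X" "X T \<in> F"
      "\<forall>t\<in>{0..T}. X t \<in> P" using r unfolding reaches_def by blast
    have "\<forall>t\<in>{0..T}. X t \<in> R" using traj[OF *(2,3,5,4)] *(5) RPA by auto
    then show "reaches A a B R x F" unfolding reaches_def using * by blast
  qed
  have part3: "\<forall>x \<in> AA. \<not> reaches A a B P x F" using notAA by blast
  have main: "R = P - AA \<and> (\<forall>x \<in> R. reaches A a B R x F) \<and> (\<forall>x \<in> AA. \<not> reaches A a B P x F)"
    using RPA part2 part3 by blast
  show ?thesis unfolding Let_def
    using main[unfolded AA_def Am_def Ap_def Bm_def Hm_def Pp_def Bvm_def R_def] .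
qed

end
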